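(* Let $v^\alpha\mapsto w^\alpha(v^*_*;\varepsilon)$ be a rational Miura transformation such that $w^\alpha(v^*_*;\varepsilon)^{\mathrm{pol}}=v^\alpha$ and $\frac{\partial w^\alpha(v^*_*;\varepsilon)}{\partial v^1}=\delta^{\alpha,1}$ for all $\alpha$. Consider the operator $K=(K^{\alpha\beta})$, $$K^{\alpha\beta}:=\sum_{p,q\ge0}\frac{\partial w^\alpha(v^*_*;\varepsilon)}{\partial v^\mu_p}\partial_x^p\circ\eta^{\mu\nu}\partial_x\circ(-\partial_x)^q\circ\frac{\partial w^\beta(v^*_*;\varepsilon)}{\partial v^\nu_q}=\sum_{i\ge0}K^{\alpha\beta}_i(v^*_*;\varepsilon)\partial_x^i.$$ Suppose that each coefficient $K^{\alpha\beta}_i$, re-expressed in the variables $w$, belongs to $\widehat{\mathcal A}_{w^1,\dots,w^N}$. Then $K^{\alpha\beta}=\eta^{\alpha\beta}\partial_x$.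
   Context: $\eta=(\eta^{\alpha\beta})$ is a nondegenerate symmetric constant matrix; repeated Greek indices summed. $\mathcal A_{v^1,\dots,v^N}$: polynomials in $v^\alpha_k$ ($k>0$) with coefficients in $\mathbb C[[v^1,\dots,v^N]]$, $v^\alpha=v^\alpha_0$, graded by $\deg v^\alpha_k=k$ (degree-$d$ part $\mathcal A^{[d]}$); $\partial_x=\sum v^\alpha_{k+1}\partial/\partial v^\alpha_k$; $\widehat{\mathcal A}=\mathcal A[[\varepsilon]]$, $\deg\varepsilon=-1$. $\mathcal A^{\mathrm{wk}}_v$: formal power series in $v^\alpha_n-\delta^{\alpha,1}\delta_{n,1}$. $\mathcal A^{\mathrm{rt},[d]}_v$: span of expressions $\sum_{i\ge m}\frac{P_i(v^*_* )}{(v^1_x)^i}$ with $m\in\mathbb Z$, $P_i\in\mathcal A^{[d+i]}_v$, $\frac{\partial P_i}{\partial v^1_x}=0$ (viewed in $\mathcal A^{\mathrm{wk}}_v$ via $(v^1_x)^{-i}=\sum_k\binom{-i}{k}(v^1_x-1)^k$); $\mathcal A^{\mathrm{rt}}_v=\bigoplus_d\mathcal A^{\mathrm{rt},[d]}_v$; polynomial part $\big(\sum_{i\ge m}P_i/(v^1_x)^i\big)^{\mathrm{pol}}=\sum_{i=m}^0P_i/(v^1_x)^i$; $\widehat{\mathcal A}^{\mathrm{rt}}_v=\mathcal A^{\mathrm{rt}}_v[[\varepsilon]]$ with the polynomial part taken coefficientwise in $\varepsilon$. Such an expression is tame if there is $C$ with $\partial P_i/\partial v^\alpha_k=0$ for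 all $k>C$ and all $i$; an element of $\widehat{\mathcal A}^{\mathrm{rt}}_v$ is tame if all its $\varepsilon$-coefficients are; $\widehat{\mathcal A}^{\mathrm{rt},\mathrm t,[d]}_v$ denotes tame elements of degree $d$. A rational Miura transformation is a change of variables $v^\alpha\mapsto w^\alpha=v^\alpha+\varepsilon f^\alpha(v^*_*;\varepsilon)$ with $f^\alpha\in\widehat{\mathcal A}^{\mathrm{rt},\mathrm t,[1]}_v$; these form a group and any tame element can be re-expressed as a tame rational function of the new variables $w$. *)

theory Defs
  imports Complex_Main "HOL-Library.Multiset"
begin

text \<open>
The index set {1..N} is a finite type 'i; the distinguished index "1"
(used in v^1, v^1_x) is a parameter e :: 'i.  The jet variable v^alpha_k is the pair (alpha,k).
Elements of A^wk_v are formal power series in the shifted variables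
u^alpha_k = v^alpha_k - delta(alpha,e) delta(k,1), represented by their coefficient
function on monomials (finite multisets of variables).  Elements of A^wk_v[[eps]]
are sequences of such (the n-th entry is the coefficient of eps^n).
Differential operators sum_i c_i d_x^i are sequences of coefficients c_i.
\<close>

type_synonym 'i mono = "('i \<times> nat) multiset"
type_synonym 'i ser = "'i mono \<Rightarrow> complex"
type_synonym 'i eser = "nat \<Rightarrow> 'i ser"
type_synonym 'i dop = "nat \<Rightarrow> 'i eser"

text \<open>coefficientwise (locally finite) infinite sum\<close>
definition lsum :: "('j \<Rightarrow> 'i ser) \<Rightarrow> 'i ser" where
  "lsum F = (\<lambda>m. \<Sum>j\<in>{j. F j m \<noteq> 0}. F j m)"

definition ser_zero :: "'i ser" where "ser_zero = (\<lambda>m. 0)"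
definition ser_one :: "'i ser" where "ser_one = (\<lambda>m. if m = {#} then 1 else 0)"
definition ser_mult :: "'i ser \<Rightarrow> 'i ser \<Rightarrow> 'i ser" where
  "ser_mult f g = (\<lambda>m. \<Sum>a\<in>{a. a \<subseteq># m}. f a * g (m - a))"
definition ser_uvar :: "'i \<times> nat \<Rightarrow> 'i ser" where
  "ser_uvar x = (\<lambda>m. if m = {#x#} then 1 else 0)"
text \<open>the variable v^alpha_k, as an element of A^wk\<close>
definition ser_var :: "'i \<Rightarrow> 'i \<times> nat \<Rightarrow> 'i ser" where
  "ser_var e x = (\<lambda>m. ser_uvar x m + (if x = (e,1) then ser_one m else 0))"
text \<open>partial derivative d/dv^alpha_k (= d/du^alpha_k)\<close>
definition ser_deriv :: "'i \<times> nat \<Rightarrow> 'i ser \<Rightarrow> 'i ser" where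
  "ser_deriv x f = (\<lambda>m. of_nat (count m x + 1) * f (add_mset x m))"
text \<open>d_x = sum v^alpha_{k+1} d/dv^alpha_k = sum u^alpha_{k+1} d/du^alpha_k + d/du^e_0\<close>
definition ser_dx :: "'i \<Rightarrow> 'i ser \<Rightarrow> 'i ser" where
  "ser_dx e f = (\<lambda>m. (\<Sum>x\<in>{x. x \<in># m \<and> snd x \<ge> 1}.
        ser_deriv (fst x, snd x - 1) f (m - {#x#})) + ser_deriv (e,0) f m)"
definition weight :: "'i mono \<Rightarrow> nat" where
  "weight m = sum_mset (image_mset snd m)"
text \<open>(v^1_x)^(-i) = sum_k binom(-i,k) (v^1_x - 1)^k\<close>
definition vxpow :: "'i \<Rightarrow> int \<Rightarrow> 'i ser" where
  "vxpow e i = (\<lambda>m. if set_mset m \<subseteq> {(e,1)} then (of_int (-i) :: complex) gchoose (size m) else 0)"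

text \<open>P in A^[d] with dP/dv^1_x = 0 (for such P the u- and v-coordinates agree)\<close>
definition Apol_vxfree :: "'i \<Rightarrow> int \<Rightarrow> 'i ser \<Rightarrow> bool" where
  "Apol_vxfree e d P \<longleftrightarrow> ser_deriv (e,1) P = ser_zero
     \<and> finite {filter_mset (\<lambda>x. snd x > 0) m | m. P m \<noteq> 0}
     \<and> (\<forall>m. P m \<noteq> 0 \<longrightarrow> int (weight m) = d)"

text \<open>f = sum_{i>=m} P_i/(v^1_x)^i, an element of A^{rt,[d]}\<close>
definition rat_rep :: "'i \<Rightarrow> int \<Rightarrow> 'i ser \<Rightarrow> int \<Rightarrow> (int \<Rightarrow> 'i ser) \<Rightarrow> bool" where
  "rat_rep e d f m P \<longleftrightarrow> (\<forall>i. Apol_vxfree e (d + i) (P i)) \<and> (\<forall>i<m. P i = ser_zero)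
     \<and> f = lsum (\<lambda>i. ser_mult (P i) (vxpow e i))"
definition tame_rep :: "(int \<Rightarrow> 'i ser) \<Rightarrow> bool" where
  "tame_rep P \<longleftrightarrow> (\<exists>C. \<forall>i \<alpha> k. k > C \<longrightarrow> ser_deriv (\<alpha>,k) (P i) = ser_zero)"
definition rat_tame :: "'i \<Rightarrow> int \<Rightarrow> 'i ser \<Rightarrow> bool" where
  "rat_tame e d f \<longleftrightarrow> (\<exists>m P. rat_rep e d f m P \<and> tame_rep P)"
definition polpart :: "'i \<Rightarrow> int \<Rightarrow> 'i ser \<Rightarrow> 'i ser" where
  "polpart e d f = (THE g. \<exists>m P. rat_rep e d f m P
      \<and> g = (\<lambda>mo. \<Sum>i\<in>{m..0}. ser_mult (P i) (vxpow e i) mo))"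

definition ezero :: "'i eser" where "ezero = (\<lambda>n m. 0)"
definition eone :: "'i eser" where "eone = (\<lambda>n. if n = 0 then ser_one else ser_zero)"
definition econst :: "complex \<Rightarrow> 'i eser" where
  "econst c = (\<lambda>n m. if n = 0 \<and> m = {#} then c else 0)"
definition escale :: "complex \<Rightarrow> 'i eser \<Rightarrow> 'i eser" where
  "escale c F = (\<lambda>n m. c * F n m)"
definition emult :: "'i eser \<Rightarrow> 'i eser \<Rightarrow> 'i eser" where
  "emult F G = (\<lambda>n m. \<Sum>j\<le>n. ser_mult (F j) (G (n - j)) m)"
definition edx :: "'i \<Rightarrow> 'i eser \<Rightarrow> 'i eser" where
  "edx e F = (\<lambda>n. ser_dx e (F n))"
definition ederiv :: "'i \<times> nat \<Rightarrow> 'i eser \<Rightarrow> 'i eser" where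
  "ederiv x F = (\<lambda>n. ser_deriv x (F n))"

text \<open>differential operators (finite order) and their composition (Leibniz rule)\<close>
definition dop_comp :: "'i \<Rightarrow> 'i dop \<Rightarrow> 'i dop \<Rightarrow> 'i dop" where
  "dop_comp e A B = (\<lambda>i n m. \<Sum>j\<in>{j. A j \<noteq> ezero}. \<Sum>l\<in>{..min j i}.
      of_nat (j choose l) * emult (A j) ((edx e ^^ (j - l)) (B (i - l))) n m)"
definition dop_mul :: "'i eser \<Rightarrow> 'i dop" where
  "dop_mul a = (\<lambda>i. if i = 0 then a else ezero)"
definition dop_D :: "'i dop" where
  "dop_D = (\<lambda>i. if i = 1 then eone else ezero)"
definition dop_scale :: "complex \<Rightarrow> 'i dop \<Rightarrow> 'i dop" where
  "dop_scale c A = (\<lambda>i. escale c (A i))"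
definition dop_pow :: "'i \<Rightarrow> 'i dop \<Rightarrow> nat \<Rightarrow> 'i dop" where
  "dop_pow e A p = (dop_comp e A ^^ p) (dop_mul eone)"

definition Ksummand :: "'i \<Rightarrow> ('i \<Rightarrow> 'i \<Rightarrow> complex) \<Rightarrow> ('i \<Rightarrow> 'i eser) \<Rightarrow> 'i \<Rightarrow> 'i
     \<Rightarrow> nat \<times> nat \<times> 'i \<times> 'i \<Rightarrow> 'i dop" where
  "Ksummand e \<eta> w \<alpha> \<beta> t = (case t of (p, q, \<mu>, \<nu>) \<Rightarrow>
     dop_comp e (dop_comp e (dop_comp e (dop_comp e
        (dop_mul (ederiv (\<mu>, p) (w \<alpha>))) (dop_pow e dop_D p))
        (dop_scale (\<eta> \<mu> \<nu>) dop_D))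
        (dop_pow e (dop_scale (-1) dop_D) q))
        (dop_mul (ederiv (\<nu>, q) (w \<beta>))))"

text \<open>K^{alpha beta} = sum_i K_i d_x^i (sum over p,q,mu,nu, eps-adically locally finite)\<close>
definition Kop :: "'i \<Rightarrow> ('i \<Rightarrow> 'i \<Rightarrow> complex) \<Rightarrow> ('i \<Rightarrow> 'i eser) \<Rightarrow> 'i \<Rightarrow> 'i \<Rightarrow> 'i dop" where
  "Kop e \<eta> w \<alpha> \<beta> = (\<lambda>i n. lsum (\<lambda>t. Ksummand e \<eta> w \<alpha> \<beta> t i n))"

text \<open>rational Miura transformation w^alpha = v^alpha + eps f^alpha, f^alpha tame rational of degree 1;
  the eps^n-coefficient (n>=1) of w^alpha is f^alpha_{n-1}, of degree n\<close>
definition rational_miura :: "'i \<Rightarrow> ('i \<Rightarrow> 'i eser) \<Rightarrow> bool" where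
  "rational_miura e w \<longleftrightarrow> (\<forall>\<alpha>. w \<alpha> 0 = ser_var e (\<alpha>, 0))
     \<and> (\<forall>\<alpha> n. n \<ge> 1 \<longrightarrow> rat_tame e (int n) (w \<alpha> n))"

text \<open>re-expression in the variables w: substitution w^alpha_k := d_x^k w^alpha(v;eps)\<close>
definition emprod :: "'i \<Rightarrow> ('i \<Rightarrow> 'i eser) \<Rightarrow> ('i \<times> nat) list \<Rightarrow> 'i eser" where
  "emprod e w xs = foldr (\<lambda>x acc. emult ((edx e ^^ snd x) (w (fst x))) acc) xs eone"
definition emono :: "'i \<Rightarrow> ('i \<Rightarrow> 'i eser) \<Rightarrow> 'i mono \<Rightarrow> 'i eser" where
  "emono e w \<mu> = emprod e w (SOME xs. mset xs = \<mu>)"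
text \<open>G in hat-A_w: eps-coefficients polynomial in w^alpha_k (k>0), power series in w^alpha_0\<close>
definition in_Ahat :: "'i eser \<Rightarrow> bool" where
  "in_Ahat G \<longleftrightarrow> (\<forall>n. finite {filter_mset (\<lambda>x. snd x > 0) \<mu> | \<mu>. G n \<mu> \<noteq> 0})"
definition subst_terms :: "'i \<Rightarrow> ('i \<Rightarrow> 'i eser) \<Rightarrow> 'i eser \<Rightarrow> nat \<Rightarrow> 'i mono \<Rightarrow> (nat \<times> 'i mono) set" where
  "subst_terms e w G n m = {(j, \<mu>). j \<le> n \<and> G j \<mu> * emono e w \<mu> (n - j) m \<noteq> 0}"
definition expressible_in_w :: "'i \<Rightarrow> ('i \<Rightarrow> 'i eser) \<Rightarrow> 'i eser \<Rightarrow> bool" where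
  "expressible_in_w e w K \<longleftrightarrow> (\<exists>G. in_Ahat G
     \<and> (\<forall>n m. finite (subst_terms e w G n m))
     \<and> K = (\<lambda>n m. \<Sum>(j, \<mu>)\<in>subst_terms e w G n m. G j \<mu> * emono e w \<mu> (n - j) m))"

end

theory Submission
  imports Defs "HOL-Computational_Algebra.Formal_Power_Series"
begin

unbundle fps_syntax



lemma fin_sub: "finite {a. a \<subseteq># (m::'a multiset)}"
proof -
  have "{a. a \<subseteq># m} \<subseteq> (\<Union>k\<in>{..size m}. multisets_of_size (set_mset m) k)"
    by (auto simp: multisets_of_size_def dest: set_mset_mono size_mset_mono)
  thus ?thesis by (rule finite_subset) auto
qed

lemma sum_sub_single:
  assumes "\<And>a. a \<subseteq># m \<Longrightarrow> a \<noteq> b \<Longrightarrow> g a = 0" "b \<subseteq># m"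
  shows "(\<Sum>a\<in>{a. a \<subseteq># m}. g a) = (g b :: complex)"
proof -
  have "(\<Sum>a\<in>{a. a \<subseteq># m}. g a) = (\<Sum>a\<in>{a. a \<subseteq># m}. if a = b then g a else 0)"
    by (rule sum.cong) (auto simp: assms)
  also have "\<dots> = g b" using assms(2) by (simp add: sum.delta[OF fin_sub])
  finally show ?thesis .
qed

definition cst :: "'i ser \<Rightarrow> bool" where "cst f \<longleftrightarrow> (\<forall>m. m \<noteq> {#} \<longrightarrow> f m = 0)"

lemma ser_mult_cst_left: "cst f \<Longrightarrow> ser_mult f h m = f {#} * h m"
  unfolding ser_mult_def by (subst sum_sub_single[of m "{#}"]) (auto simp: cst_def)

lemma ser_mult_cst_right: "cst f \<Longrightarrow> ser_mult h f m = h m * f {#}"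
  unfolding ser_mult_def
  by (subst sum_sub_single[of m m]) (auto simp: cst_def, metis subset_mset.add_diff_inverse add.right_neutral)

lemma cst_one: "cst ser_one" by (simp add: cst_def ser_one_def)
lemma cst_zero: "cst ser_zero" by (simp add: cst_def ser_zero_def)

lemma ser_mult_uvar_left:
  "ser_mult (ser_uvar x) F m = (if x \<in># m then F (m - {#x#}) else 0)"
proof (cases "x \<in># m")
  case True
  then show ?thesis unfolding ser_mult_def
    by (subst sum_sub_single[of m "{#x#}"]) (auto simp: ser_uvar_def)
next
  case False
  have "\<forall>a\<in>{a. a \<subseteq># m}. ser_uvar x a * F (m - a) = 0"
    using False by (auto simp: ser_uvar_def)
  then show ?thesis using False unfolding ser_mult_def by (simp add: sum.neutral)
qed

abbreviation rep :: "'i \<Rightarrow> nat \<Rightarrow> ('i \<times> nat) multiset" where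
  "rep e k \<equiv> replicate_mset k (e,1)"

definition slice :: "'i \<Rightarrow> 'i ser \<Rightarrow> 'i mono \<Rightarrow> complex fps" where
  "slice e f r = Abs_fps (\<lambda>k. f (r + rep e k))"

lemma slice_nth[simp]: "slice e f r $ k = f (r + rep e k)"
  by (simp add: slice_def)

lemma decomp: "m = filter_mset (\<lambda>y. y \<noteq> (e,1)) m + rep e (count m (e,1))"
  by (auto simp: multiset_eq_iff)

lemma minus_split:
  assumes "r1 \<subseteq># r" "j \<le> k"
  shows "r + rep e k - (r1 + rep e j) = (r - r1) + rep e (k - j)"
  using assms by (auto simp: multiset_eq_iff subseteq_mset_def)

lemma slice_mult:
  assumes "(e,1) \<notin># r"
  shows "slice e (ser_mult f h) r = (\<Sum>r1\<in>{r1. r1 \<subseteq># r}. slice e f r1 * slice e h (r - r1))"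
proof (rule fps_ext)
  fix k
  have "(\<Sum>r1\<in>{r1. r1 \<subseteq># r}. slice e f r1 * slice e h (r - r1)) $ k
      = (\<Sum>r1\<in>{r1. r1 \<subseteq># r}. \<Sum>j\<in>{0..k}. f (r1 + rep e j) * h (r - r1 + rep e (k - j)))"
    by (simp add: fps_sum_nth fps_mult_nth)
  also have "\<dots> = (\<Sum>p\<in>Sigma {r1. r1 \<subseteq># r} (\<lambda>_. {0..k}). f (fst p + rep e (snd p)) * h (r - fst p + rep e (k - snd p)))"
    by (subst sum.Sigma) (auto simp: fin_sub case_prod_beta)
  also have "\<dots> = (\<Sum>a\<in>{a. a \<subseteq># r + rep e k}. f a * h (r + rep e k - a))"
  proof (rule sum.reindex_bij_witness[where j = "\<lambda>p. fst p + rep e (snd p)"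
        and i = "\<lambda>a. (filter_mset (\<lambda>y. y \<noteq> (e,1)) a, count a (e,1))"])
    fix p assume p: "p \<in> Sigma {r1. r1 \<subseteq># r} (\<lambda>_. {0..k})"
    then have "(e,1) \<notin># fst p" using assms by (auto dest: mset_subset_eqD)
    then show "(filter_mset (\<lambda>y. y \<noteq> (e,1)) (fst p + rep e (snd p)), count (fst p + rep e (snd p)) (e,1)) = p"
      by (cases p) (auto simp: multiset_eq_iff not_in_iff)
    show "fst p + rep e (snd p) \<in> {a. a \<subseteq># r + rep e k}"
      using p by (auto intro!: subset_mset.add_mono simp: replicate_mset_msubseteq_iff)
    show "f (fst p + rep e (snd p)) * h (r + rep e k - (fst p + rep e (snd p)))
        = f (fst p + rep e (snd p)) * h (r - fst p + rep e (k - snd p))"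
    proof -
      have "r + rep e k - (fst p + rep e (snd p)) = (r - fst p) + rep e (k - snd p)"
        using p by (intro minus_split) auto
      then show ?thesis by (simp only:)
    qed
  next
    fix a assume a: "a \<in> {a. a \<subseteq># r + rep e k}"
    show "fst (filter_mset (\<lambda>y. y \<noteq> (e,1)) a, count a (e,1)) + rep e (snd (filter_mset (\<lambda>y. y \<noteq> (e,1)) a, count a (e,1))) = a"
      by (simp only: fst_conv snd_conv decomp[of a e, symmetric])
    have "filter_mset (\<lambda>y. y \<noteq> (e,1)) a \<subseteq># r"
      unfolding subseteq_mset_def
    proof
      fix x
      have "count a x \<le> count (r + rep e k) x" using mset_subset_eq_count[OF a[simplified], of x] by simp
      then show "count (filter_mset (\<lambda>y. y \<noteq> (e,1)) a) x \<le> count r x"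
        by (cases "x = (e,1)") auto
    qed
    moreover have "count a (e,1) \<le> k"
    proof -
      have "count a (e,1) \<le> count (r + rep e k) (e,1)" using mset_subset_eq_count[OF a[simplified], of "(e,1)"] by simp
      then show ?thesis using assms by (simp add: not_in_iff)
    qed
    ultimately show "(filter_mset (\<lambda>y. y \<noteq> (e,1)) a, count a (e,1)) \<in> Sigma {r1. r1 \<subseteq># r} (\<lambda>_. {0..k})"
      by auto
  qed
  finally show "slice e (ser_mult f h) r $ k = (\<Sum>r1\<in>{r1. r1 \<subseteq># r}. slice e f r1 * slice e h (r - r1)) $ k"
    by (simp add: ser_mult_def)
qed


definition fdeg_lt :: "complex fps \<Rightarrow> nat \<Rightarrow> bool" where
  "fdeg_lt p M \<longleftrightarrow> (\<forall>j\<ge>M. p $ j = 0)"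
definition npf_at :: "complex fps \<Rightarrow> nat \<Rightarrow> bool" where
  "npf_at s M \<longleftrightarrow> fdeg_lt (s * (1 + fps_X) ^ M) M"
definition npf :: "complex fps \<Rightarrow> bool" where
  "npf s \<longleftrightarrow> (\<exists>M. npf_at s M)"

lemma onepX_nth: "((1 + fps_X) ^ n :: complex fps) $ k = of_nat (n choose k)"
  by (simp add: fps_binomial_of_nat[symmetric] binomial_gbinomial)

lemma fdeg_lt_mult:
  assumes "fdeg_lt p a" "fdeg_lt q b" "1 \<le> a" "1 \<le> b"
  shows "fdeg_lt (p * q) (a + b - 1)"
  unfolding fdeg_lt_def
proof (intro allI impI)
  fix j assume j: "a + b - 1 \<le> j"
  have *: "p $ i * q $ (j - i) = 0" if "i \<in> {0..j}" for i
  proof (cases "a \<le> i")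
    case True then show ?thesis using assms(1) by (simp add: fdeg_lt_def)
  next
    case False then have "b \<le> j - i" using j that by auto
    then show ?thesis using assms(2) by (simp add: fdeg_lt_def)
  qed
  show "(p * q) $ j = 0" unfolding fps_mult_nth by (rule sum.neutral) (use * in blast)
qed

lemma fdeg_lt_mono: "fdeg_lt p a \<Longrightarrow> a \<le> b \<Longrightarrow> fdeg_lt p b"
  by (simp add: fdeg_lt_def)

lemma fdeg_lt_0: "fdeg_lt p 0 \<Longrightarrow> p = 0"
  by (simp add: fdeg_lt_def fps_eq_iff)

lemma fdeg_onepX: "fdeg_lt ((1 + fps_X) ^ d) (d + 1)"
  by (simp add: fdeg_lt_def onepX_nth)

lemma fdeg_onepX1: "fdeg_lt (1 + fps_X) 2"
  by (simp add: fdeg_lt_def fps_X_def)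

lemma fdeg_add: "fdeg_lt p a \<Longrightarrow> fdeg_lt q a \<Longrightarrow> fdeg_lt (p + q) a"
  by (simp add: fdeg_lt_def)
lemma fdeg_diff: "fdeg_lt p a \<Longrightarrow> fdeg_lt q a \<Longrightarrow> fdeg_lt (p - q) a"
  by (simp add: fdeg_lt_def)
lemma fdeg_const_mult: "fdeg_lt p a \<Longrightarrow> fdeg_lt (fps_const c * p) a"
  by (simp add: fdeg_lt_def)

lemma npf_at_zero_s: "npf_at s 0 \<Longrightarrow> s = 0"
  by (simp add: npf_at_def fdeg_lt_0)

lemma npf_at_Suc: assumes "npf_at s M" shows "npf_at s (Suc M)"
proof (cases "M = 0")
  case True then have "s = 0" using assms npf_at_zero_s by blast
  then show ?thesis by (simp add: npf_at_def fdeg_lt_def)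
next
  case False
  have "fdeg_lt ((s * (1 + fps_X) ^ M) * (1 + fps_X)) (M + 2 - 1)"
    using assms False fdeg_onepX1 by (intro fdeg_lt_mult) (auto simp: npf_at_def)
  then show ?thesis by (simp add: npf_at_def mult.assoc power_Suc2 del: power_Suc)
qed

lemma npf_at_mono: "npf_at s M \<Longrightarrow> M \<le> M' \<Longrightarrow> npf_at s M'"
proof (induction M' )
  case 0 then show ?case by simp
next
  case (Suc M') then show ?case
    by (cases "M \<le> M'") (auto intro: npf_at_Suc simp: le_Suc_eq)
qed

lemma npf_atD: "npf s \<Longrightarrow> \<exists>M0. \<forall>M\<ge>M0. npf_at s M"
  unfolding npf_def using npf_at_mono by blast

lemma npf_zero: "npf 0" by (auto simp: npf_def npf_at_def fdeg_lt_def)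

lemma npf_add: assumes "npf s" "npf t" shows "npf (s + t)"
proof -
  obtain M1 M2 where "\<forall>M\<ge>M1. npf_at s M" "\<forall>M\<ge>M2. npf_at t M" using assms npf_atD by metis
  then have "npf_at s (max M1 M2)" "npf_at t (max M1 M2)" by auto
  then have "npf_at (s + t) (max M1 M2)" by (simp add: npf_at_def distrib_right fdeg_add)
  then show ?thesis by (auto simp: npf_def)
qed

lemma npf_const_mult: "npf s \<Longrightarrow> npf (fps_const c * s)"
  by (auto simp: npf_def npf_at_def mult.assoc intro: fdeg_const_mult)

lemma npf_sum: "(\<And>x. x \<in> A \<Longrightarrow> npf (f x)) \<Longrightarrow> npf (\<Sum>x\<in>A. f x)"
proof (induction A rule: infinite_finite_induct)
  case (infinite A) then show ?case by (simp add: npf_zero)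
next
  case empty then show ?case by (simp add: npf_zero)
next
  case (insert x F) then show ?case by (simp add: npf_add)
qed

lemma npf_mult: assumes "npf s" "npf t" shows "npf (s * t)"
proof -
  obtain M1 M2 where "\<forall>M\<ge>M1. npf_at s M" "\<forall>M\<ge>M2. npf_at t M" using assms npf_atD by metis
  then have a: "npf_at s (M1 + 1)" "npf_at t (M2 + 1)" by auto
  have "fdeg_lt ((s * (1 + fps_X) ^ (M1+1)) * (t * (1 + fps_X) ^ (M2+1))) (M1 + 1 + (M2 + 1) - 1)"
    using a by (intro fdeg_lt_mult) (auto simp: npf_at_def)
  moreover have "(s * t) * (1 + fps_X) ^ (M1 + 1 + (M2 + 1)) = (s * (1 + fps_X) ^ (M1+1)) * (t * (1 + fps_X) ^ (M2+1))"
    by (simp add: power_add algebra_simps)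
  ultimately have "fdeg_lt ((s * t) * (1 + fps_X) ^ (M1 + 1 + (M2 + 1))) (M1 + 1 + (M2 + 1))"
    by (metis fdeg_lt_mono diff_le_self)
  then show ?thesis unfolding npf_def npf_at_def by blast
qed

lemma npf_deriv: assumes "npf s" shows "npf (fps_deriv s)"
proof -
  obtain M0 where "\<forall>M\<ge>M0. npf_at s M" using assms npf_atD by metis
  then have a: "npf_at s (Suc (Suc M0))" by auto
  define K where "K = Suc M0"
  define p where "p = s * (1 + fps_X) ^ Suc K"
  have p: "fdeg_lt p (Suc K)" using a by (simp add: npf_at_def p_def K_def)
  have dp: "fdeg_lt (fps_deriv p) K" using p by (simp add: fdeg_lt_def)
  have "fps_deriv p = fps_deriv s * (1 + fps_X) ^ Suc K + s * (fps_const (of_nat (Suc K)) * (1 + fps_X) ^ K)"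
  proof -
    have "fps_deriv ((1 + fps_X :: complex fps) ^ Suc K) = fps_const (of_nat (Suc K)) * (1 + fps_X) ^ K"
      by (subst fps_deriv_power) simp
    then show ?thesis unfolding p_def fps_deriv_mult by simp
  qed
  also have "\<dots> = fps_deriv s * (1 + fps_X) ^ Suc K + fps_const (of_nat (Suc K)) * s * (1 + fps_X) ^ K"
    by (simp add: algebra_simps)
  finally have dpe: "fps_deriv p = fps_deriv s * (1 + fps_X) ^ Suc K + fps_const (of_nat (Suc K)) * s * (1 + fps_X) ^ K" .
  have eq: "fps_deriv s * (1 + fps_X) ^ Suc (Suc K) = fps_deriv p * (1 + fps_X) - fps_const (of_nat (Suc K)) * p"
    unfolding dpe by (simp add: p_def algebra_simps)
  have "fdeg_lt (fps_deriv p * (1 + fps_X)) (K + 2 - 1)"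
    using dp fdeg_onepX1 by (intro fdeg_lt_mult) (auto simp: K_def)
  then have "fdeg_lt (fps_deriv p * (1 + fps_X)) (Suc (Suc K))" by (rule fdeg_lt_mono) auto
  moreover have "fdeg_lt (fps_const (of_nat (Suc K)) * p) (Suc (Suc K))"
    using p by (intro fdeg_const_mult) (rule fdeg_lt_mono, auto)
  ultimately have "npf_at (fps_deriv s) (Suc (Suc K))"
    unfolding npf_at_def eq by (rule fdeg_diff)
  then show ?thesis by (auto simp: npf_def)
qed

lemma npf_binom: "1 \<le> M \<Longrightarrow> npf (fps_const c * fps_binomial (- of_nat M))"
proof -
  assume M: "1 \<le> M"
  have "fps_const c * fps_binomial (- of_nat M) * (1 + fps_X) ^ M = fps_const c * (fps_binomial (- of_nat M) * fps_binomial (of_nat M))"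
    by (simp add: fps_binomial_of_nat mult.assoc)
  also have "\<dots> = fps_const c" by (simp flip: fps_binomial_add_mult)
  finally have eq: "fps_const c * fps_binomial (- of_nat M) * (1 + fps_X) ^ M = fps_const c" .
  have "npf_at (fps_const c * fps_binomial (- of_nat M)) M"
    unfolding npf_at_def eq fdeg_lt_def using M by simp
  then show ?thesis by (auto simp: npf_def)
qed

lemma poly_coeffs_zero:
  assumes C: "finite C"
    and d: "fdeg_lt ((\<Sum>c\<in>C. fps_const (g c) * (1 + fps_X) ^ c) * (1 + fps_X) ^ M) (M + b)"
    and c: "c \<in> C" "b \<le> c"
  shows "g c = 0"
proof (rule ccontr)
  assume nz: "g c \<noteq> 0"
  define C' where "C' = {c\<in>C. b \<le> c \<and> g c \<noteq> 0}"
  have C'f: "finite C'" "C' \<noteq> {}" using C c nz by (auto simp: C'_def)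
  define cm where "cm = Max C'"
  have cm: "cm \<in> C'" using C'f by (simp add: cm_def)
  have le: "\<And>c'. c' \<in> C' \<Longrightarrow> c' \<le> cm" using C'f by (simp add: cm_def)
  have "((\<Sum>c\<in>C. fps_const (g c) * (1 + fps_X) ^ c) * (1 + fps_X) ^ M) $ (cm + M)
      = (\<Sum>c\<in>C. g c * of_nat ((c + M) choose (cm + M)))"
    by (simp add: sum_distrib_right fps_sum_nth mult.assoc power_add[symmetric] onepX_nth)
  also have "\<dots> = (\<Sum>c\<in>C. if c = cm then g c else 0)"
  proof (rule sum.cong[OF refl])
    fix c' assume c': "c' \<in> C"
    show "g c' * of_nat ((c' + M) choose (cm + M)) = (if c' = cm then g c' else 0)"
    proof (cases "c' < cm")
      case True then show ?thesis by simp
    next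
      case False
      show ?thesis
      proof (cases "c' = cm")
        case False
        with \<open>\<not> c' < cm\<close> have "cm < c'" by simp
        then have "c' \<notin> C'" using le by force
        moreover have "b \<le> c'" using cm \<open>cm < c'\<close> by (auto simp: C'_def)
        ultimately have "g c' = 0" using c' by (auto simp: C'_def)
        then show ?thesis using \<open>c' \<noteq> cm\<close> by simp
      qed simp
    qed
  qed
  also have "\<dots> = g cm" using cm C by (simp add: C'_def sum.delta')
  finally have "g cm = 0" using d cm by (auto simp: fdeg_lt_def C'_def)
  then show False using cm by (simp add: C'_def)
qed


definition NP :: "'i \<Rightarrow> 'i ser \<Rightarrow> bool" where
  "NP e f \<longleftrightarrow> (\<forall>m. (e,0) \<in># m \<longrightarrow> f m = 0) \<and> (\<forall>r. (e,1) \<notin># r \<longrightarrow> npf (slice e f r))"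

lemma NP_e0: "NP e f \<Longrightarrow> (e,0) \<in># m \<Longrightarrow> f m = 0" by (simp add: NP_def)
lemma NP_slice: "NP e f \<Longrightarrow> (e,1) \<notin># r \<Longrightarrow> npf (slice e f r)" by (simp add: NP_def)

lemma slice_add: "slice e (\<lambda>m. f m + g m) r = slice e f r + slice e g r"
  by (simp add: fps_eq_iff)
lemma slice_scale: "slice e (\<lambda>m. c * f m) r = fps_const c * slice e f r"
  by (simp add: fps_eq_iff)
lemma slice_sum: "slice e (\<lambda>m. \<Sum>x\<in>A. F x m) r = (\<Sum>x\<in>A. slice e (F x) r)"
  by (simp add: fps_eq_iff fps_sum_nth)

lemma NP_zero: "NP e (\<lambda>m. 0)"
proof -
  have "slice e (\<lambda>m. 0) r = 0" for r by (simp add: fps_eq_iff)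
  then show ?thesis by (simp add: NP_def npf_zero)
qed

lemma NP_ser_zero: "NP e ser_zero" using NP_zero by (simp add: ser_zero_def)

lemma NP_add: "NP e f \<Longrightarrow> NP e g \<Longrightarrow> NP e (\<lambda>m. f m + g m)"
  by (simp add: NP_def slice_add npf_add)

lemma NP_scale: "NP e f \<Longrightarrow> NP e (\<lambda>m. c * f m)"
  by (simp add: NP_def slice_scale npf_const_mult)

lemma NP_sum: "(\<And>x. x \<in> A \<Longrightarrow> NP e (F x)) \<Longrightarrow> NP e (\<lambda>m. \<Sum>x\<in>A. F x m)"
  by (simp add: NP_def slice_sum npf_sum)

lemma NP_mult: assumes f: "NP e f" and h: "NP e h" shows "NP e (ser_mult f h)"
  unfolding NP_def
proof (intro conjI allI impI)
  fix m :: "'a mono" assume m: "(e,0) \<in># m"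
  have "f a * h (m - a) = 0" if "a \<subseteq># m" for a
  proof (cases "(e,0) \<in># a")
    case True then show ?thesis using f by (simp add: NP_e0)
  next
    case False
    then have "(e,0) \<in># m - a" using m by (simp add: in_diff_count not_in_iff)
    then show ?thesis using h by (simp add: NP_e0)
  qed
  then show "ser_mult f h m = 0" unfolding ser_mult_def by (intro sum.neutral) auto
next
  fix r :: "'a mono" assume r: "(e,1) \<notin># r"
  have *: "npf (slice e f r1 * slice e h (r - r1))" if "r1 \<subseteq># r" for r1
  proof -
    have "(e,1) \<notin># r1" using that r by (auto dest: mset_subset_eqD)
    moreover have "(e,1) \<notin># r - r1" using r by (auto dest: in_diffD)
    ultimately show ?thesis using f h by (intro npf_mult) (auto simp: NP_slice)
  qed
  then show "npf (slice e (ser_mult f h) r)"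
    by (simp only: slice_mult[OF r]) (rule npf_sum, simp add: *)
qed

lemma cst_mult_left: "cst c \<Longrightarrow> ser_mult c f = (\<lambda>m. c {#} * f m)"
  by (rule ext) (simp add: ser_mult_cst_left)
lemma cst_mult_right: "cst c \<Longrightarrow> ser_mult f c = (\<lambda>m. c {#} * f m)"
  by (rule ext) (simp add: ser_mult_cst_right mult.commute)

lemma NP_deriv: assumes f: "NP e f" shows "NP e (ser_deriv x f)"
  unfolding NP_def
proof (intro conjI allI impI)
  fix m :: "'a mono" assume "(e,0) \<in># m"
  then show "ser_deriv x f m = 0" using f by (simp add: ser_deriv_def NP_e0)
next
  fix r :: "'a mono" assume r: "(e,1) \<notin># r"
  show "npf (slice e (ser_deriv x f) r)"
  proof (cases "x = (e,1)")
    case True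
    have "slice e (ser_deriv x f) r = fps_deriv (slice e f r)"
      using True r by (simp add: fps_eq_iff ser_deriv_def not_in_iff algebra_simps)
    then show ?thesis using f r by (simp add: NP_slice npf_deriv)
  next
    case False
    have "slice e (ser_deriv x f) r = fps_const (of_nat (count r x + 1)) * slice e f (add_mset x r)"
      using False r by (simp add: fps_eq_iff ser_deriv_def)
    moreover have "(e,1) \<notin># add_mset x r" using False r by simp
    ultimately show ?thesis using f by (simp add: NP_slice npf_const_mult)
  qed
qed

lemma NP_dx: assumes f: "NP e f" shows "NP e (ser_dx e f)"
proof -
  define S where "S m = {x. x \<in># m \<and> 1 \<le> snd x}" for m :: "'a mono"
  have e0: "ser_deriv (e,0) f m = 0" for m using f by (simp add: ser_deriv_def NP_e0)
  have dx: "ser_dx e f = (\<lambda>m. \<Sum>x\<in>S m. ser_deriv (fst x, snd x - 1) f (m - {#x#}))"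
    by (rule ext) (simp add: ser_dx_def e0 S_def)
  show ?thesis
    unfolding NP_def
  proof (intro conjI allI impI)
    fix m :: "'a mono" assume m: "(e,0) \<in># m"
    have "ser_deriv (fst x, snd x - 1) f (m - {#x#}) = 0" if "x \<in> S m" for x
    proof -
      have "x \<noteq> (e,0)" using that by (auto simp: S_def)
      then have "(e,0) \<in># m - {#x#}" using m by (simp add: in_diff_count)
      then show ?thesis using f by (simp add: ser_deriv_def NP_e0)
    qed
    then show "ser_dx e f m = 0" unfolding dx by (simp add: sum.neutral)
  next
    fix r :: "'a mono" assume r: "(e,1) \<notin># r"
    define R where "R = {x. x \<in># r \<and> 1 \<le> snd x}"
    have "slice e (ser_dx e f) r = (\<Sum>x\<in>R. slice e (ser_deriv (fst x, snd x - 1) f) (r - {#x#}))"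
    proof (rule fps_ext)
      fix k
      have fin: "finite (S (r + rep e k))" unfolding S_def by (rule finite_subset[of _ "set_mset (r + rep e k)"]) auto
      have sub: "R \<subseteq> S (r + rep e k)" by (auto simp: R_def S_def)
      have z: "\<forall>x\<in>S (r + rep e k) - R. ser_deriv (fst x, snd x - 1) f (r + rep e k - {#x#}) = 0"
      proof
        fix x assume x: "x \<in> S (r + rep e k) - R"
        then have "x = (e,1)" by (auto simp: R_def S_def split: if_splits)
        then show "ser_deriv (fst x, snd x - 1) f (r + rep e k - {#x#}) = 0" by (simp add: e0)
      qed
      have "slice e (ser_dx e f) r $ k = (\<Sum>x\<in>S (r + rep e k). ser_deriv (fst x, snd x - 1) f (r + rep e k - {#x#}))"
        by (simp add: dx)
      also have "\<dots> = (\<Sum>x\<in>R. ser_deriv (fst x, snd x - 1) f (r + rep e k - {#x#}))"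
        using fin sub z by (intro sum.mono_neutral_right) auto
      also have "\<dots> = (\<Sum>x\<in>R. ser_deriv (fst x, snd x - 1) f (r - {#x#} + rep e k))"
      proof (rule sum.cong[OF refl])
        fix x assume "x \<in> R"
        then have "r + rep e k - {#x#} = r - {#x#} + rep e k" by (auto simp: R_def multiset_eq_iff)
        then show "ser_deriv (fst x, snd x - 1) f (r + rep e k - {#x#}) = ser_deriv (fst x, snd x - 1) f (r - {#x#} + rep e k)" by simp
      qed
      finally show "slice e (ser_dx e f) r $ k = (\<Sum>x\<in>R. slice e (ser_deriv (fst x, snd x - 1) f) (r - {#x#})) $ k"
        by (simp add: fps_sum_nth)
    qed
    moreover have "npf (slice e (ser_deriv (fst x, snd x - 1) f) (r - {#x#}))" if "x \<in> R" for x
      using r f by (intro NP_slice NP_deriv) (auto dest: in_diffD)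
    ultimately show "npf (slice e (ser_dx e f) r)" by (simp add: npf_sum)
  qed
qed

lemma cst_deriv: "cst f \<Longrightarrow> ser_deriv x f = ser_zero"
  by (rule ext) (simp add: ser_deriv_def cst_def ser_zero_def)

lemma cst_dx: "cst f \<Longrightarrow> ser_dx e f = ser_zero"
  by (rule ext) (simp add: ser_dx_def cst_deriv ser_zero_def)

lemma cst_zero': "cst (\<lambda>m. 0)" by (simp add: cst_def)
lemma cst_add: "cst f \<Longrightarrow> cst g \<Longrightarrow> cst (\<lambda>m. f m + g m)" by (simp add: cst_def)
lemma cst_scale: "cst f \<Longrightarrow> cst (\<lambda>m. c * f m)" by (simp add: cst_def)
lemma cst_sum: "(\<And>x. x \<in> A \<Longrightarrow> cst (F x)) \<Longrightarrow> cst (\<lambda>m. \<Sum>x\<in>A. F x m)"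
  by (simp add: cst_def)
lemma cst_mult: "cst f \<Longrightarrow> cst g \<Longrightarrow> cst (ser_mult f g)"
  by (simp add: cst_mult_left cst_scale)


definition okE :: "'i \<Rightarrow> 'i eser \<Rightarrow> bool" where
  "okE e F \<longleftrightarrow> cst (F 0) \<and> (\<forall>n\<ge>1. NP e (F n))"

lemma okE_sum: "(\<And>x. x \<in> A \<Longrightarrow> okE e (F x)) \<Longrightarrow> okE e (\<lambda>n m. \<Sum>x\<in>A. F x n m)"
  by (simp add: okE_def cst_sum NP_sum)

lemma okE_scale: "okE e F \<Longrightarrow> okE e (\<lambda>n m. c * F n m)"
  by (simp add: okE_def cst_scale NP_scale)

lemma okE_ezero: "okE e ezero"
  by (simp add: okE_def ezero_def cst_zero' NP_zero)

lemma okE_eone: "okE e eone"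
  by (simp add: okE_def eone_def cst_one NP_ser_zero)

lemma okE_escale: "okE e F \<Longrightarrow> okE e (escale c F)"
  unfolding escale_def by (rule okE_scale)

lemma okE_emult: assumes F: "okE e F" and G: "okE e G" shows "okE e (emult F G)"
  unfolding okE_def
proof (intro conjI allI impI)
  show "cst (emult F G 0)" using F G by (simp add: emult_def okE_def cst_mult)
next
  fix n :: nat assume n: "1 \<le> n"
  have "NP e (ser_mult (F j) (G (n - j)))" if "j \<in> {..n}" for j
  proof -
    show ?thesis
    proof (cases "j = 0")
      case True then show ?thesis using F G n by (simp add: okE_def cst_mult_left NP_scale)
    next
      case False
      show ?thesis
      proof (cases "j = n")
        case True then show ?thesis using F G n by (simp add: okE_def cst_mult_right NP_scale)
      next
        case False
        then have "j < n" using that by auto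
        then show ?thesis using F G n \<open>j \<noteq> 0\<close> by (intro NP_mult) (auto simp: okE_def)
      qed
    qed
  qed
  then show "NP e (emult F G n)" unfolding emult_def by (rule NP_sum)
qed

lemma okE_edx: assumes F: "okE e F" shows "okE e (edx e F)"
  using F by (simp add: okE_def edx_def cst_dx cst_zero NP_dx)

lemma okE_edx_pow: "okE e F \<Longrightarrow> okE e ((edx e ^^ k) F)"
  by (induction k) (simp_all add: okE_edx)

definition okD :: "'i \<Rightarrow> 'i dop \<Rightarrow> bool" where
  "okD e A \<longleftrightarrow> (\<forall>i. okE e (A i))"

lemma okD_comp: assumes A: "okD e A" and B: "okD e B" shows "okD e (dop_comp e A B)"
  unfolding okD_def dop_comp_def
proof
  fix i
  show "okE e (\<lambda>n m. \<Sum>j\<in>{j. A j \<noteq> ezero}. \<Sum>l\<in>{..min j i}.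
      of_nat (j choose l) * emult (A j) ((edx e ^^ (j - l)) (B (i - l))) n m)"
    apply (rule okE_sum)
    apply (rule okE_sum)
    apply (rule okE_scale)
    apply (rule okE_emult)
    using A B by (auto simp: okD_def intro: okE_edx_pow)
qed

lemma okD_mul: "okE e a \<Longrightarrow> okD e (dop_mul a)"
  by (simp add: okD_def dop_mul_def okE_ezero)

lemma okD_D: "okD e dop_D"
  by (simp add: okD_def dop_D_def okE_ezero okE_eone)

lemma okD_scale: "okD e A \<Longrightarrow> okD e (dop_scale c A)"
  by (simp add: okD_def dop_scale_def okE_escale)

lemma okD_pow: "okD e A \<Longrightarrow> okD e (dop_pow e A p)"
  unfolding dop_pow_def
  by (induction p) (simp_all add: okD_comp okD_mul okE_eone)

lemma okD_Ksummand:
  assumes "\<And>\<mu> p. okE e (ederiv (\<mu>, p) (w \<alpha>))" "\<And>\<nu> q. okE e (ederiv (\<nu>, q) (w \<beta>))"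
  shows "okD e (Ksummand e \<eta> w \<alpha> \<beta> t)"
  using assms unfolding Ksummand_def
  by (cases t) (auto intro!: okD_comp okD_mul okD_pow okD_scale okD_D)

definition van :: "nat \<Rightarrow> 'i eser \<Rightarrow> bool" where
  "van N F \<longleftrightarrow> (\<forall>j\<le>N. F j = ser_zero)"

lemma van_sum: "(\<And>x. x \<in> A \<Longrightarrow> van N (F x)) \<Longrightarrow> van N (\<lambda>n m. \<Sum>x\<in>A. F x n m)"
  by (simp add: van_def ser_zero_def fun_eq_iff)

lemma van_scale: "van N F \<Longrightarrow> van N (\<lambda>n m. c * F n m)"
  by (simp add: van_def ser_zero_def fun_eq_iff)

lemma van_emult_l: "van N F \<Longrightarrow> van N (emult F G)"
  by (simp add: van_def emult_def ser_mult_def ser_zero_def fun_eq_iff)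

lemma van_emult_r: "van N G \<Longrightarrow> van N (emult F G)"
  by (simp add: van_def emult_def ser_mult_def ser_zero_def fun_eq_iff)

lemma ser_dx_zero: "ser_dx e ser_zero = ser_zero"
  by (simp add: cst_dx cst_zero)

lemma van_edx: "van N F \<Longrightarrow> van N (edx e F)"
  by (simp add: van_def edx_def ser_dx_zero)

lemma van_edx_pow: "van N F \<Longrightarrow> van N ((edx e ^^ k) F)"
  by (induction k) (simp_all add: van_edx)

definition vanD :: "nat \<Rightarrow> 'i dop \<Rightarrow> bool" where
  "vanD N A \<longleftrightarrow> (\<forall>i. van N (A i))"

lemma vanD_comp_l: "vanD N A \<Longrightarrow> vanD N (dop_comp e A B)"
  unfolding vanD_def dop_comp_def
  by (intro allI van_sum van_scale van_emult_l) auto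

lemma vanD_comp_r: "vanD N B \<Longrightarrow> vanD N (dop_comp e A B)"
  unfolding vanD_def dop_comp_def
  by (intro allI van_sum van_scale van_emult_r van_edx_pow) auto

lemma van_ezero: "van N ezero" by (simp add: van_def ezero_def ser_zero_def)

lemma vanD_mul: "van N a \<Longrightarrow> vanD N (dop_mul a)"
  by (simp add: vanD_def dop_mul_def van_ezero)

lemma vanD_Ksummand:
  assumes "van N (ederiv (\<mu>, p) (w \<alpha>)) \<or> van N (ederiv (\<nu>, q) (w \<beta>))"
  shows "vanD N (Ksummand e \<eta> w \<alpha> \<beta> (p, q, \<mu>, \<nu>))"
  using assms unfolding Ksummand_def prod.case
  by (blast intro: vanD_comp_l vanD_comp_r vanD_mul)


definition fo :: "nat \<Rightarrow> 'i dop \<Rightarrow> bool" where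
  "fo N A \<longleftrightarrow> (\<forall>j>N. A j = ezero)"

lemma edx_ezero: "edx e ezero = ezero"
  using ser_dx_zero by (simp add: edx_def ezero_def ser_zero_def fun_eq_iff)

lemma edx_pow_ezero: "(edx e ^^ k) ezero = ezero"
  by (induction k) (simp_all add: edx_ezero)

lemma emult_ezero_r: "emult F ezero = ezero"
  by (simp add: emult_def ezero_def ser_mult_def fun_eq_iff)

lemma fo_comp: assumes A: "fo NA A" and B: "fo NB B" shows "fo (NA + NB) (dop_comp e A B)"
  unfolding fo_def
proof (intro allI impI)
  fix i assume i: "NA + NB < i"
  have "emult (A j) ((edx e ^^ (j - l)) (B (i - l))) = ezero" if "A j \<noteq> ezero" "l \<in> {..min j i}" for j l
  proof -
    have "j \<le> NA" using A that(1) by (meson fo_def leI)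
    then have "B (i - l) = ezero" using B i that(2) by (auto simp: fo_def)
    then show ?thesis by (simp add: edx_pow_ezero emult_ezero_r)
  qed
  then show "dop_comp e A B i = ezero"
    unfolding dop_comp_def by (simp add: ezero_def fun_eq_iff)
qed

lemma fo_mul: "fo 0 (dop_mul a)" by (simp add: fo_def dop_mul_def)
lemma fo_D: "fo 1 dop_D" by (simp add: fo_def dop_D_def)
lemma fo_scale: "fo N A \<Longrightarrow> fo N (dop_scale c A)"
  by (simp add: fo_def dop_scale_def escale_def ezero_def fun_eq_iff)
lemma fo_pow: "fo N A \<Longrightarrow> fo (p * N) (dop_pow e A p)"
  unfolding dop_pow_def
proof (induction p)
  case 0 then show ?case by (simp add: fo_mul)
next
  case (Suc p) then show ?case using fo_comp[of N A "p * N"] by (simp add: add.commute)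
qed

lemma edx_pow_nth: "(edx e ^^ k) F n = (ser_dx e ^^ k) (F n)"
  by (induction k) (simp_all add: edx_def)

lemma ser_dx_pow_cst: "cst g \<Longrightarrow> 0 < k \<Longrightarrow> (ser_dx e ^^ k) g = ser_zero"
proof (induction k)
  case 0 then show ?case by simp
next
  case (Suc k) then show ?case
    by (cases k) (simp_all add: cst_dx ser_dx_zero)
qed

lemma comp0:
  assumes foA: "fo NA A" and A: "okD e A" and B: "okD e B"
  shows "dop_comp e A B i 0 {#} = (\<Sum>j\<le>i. A j 0 {#} * B (i - j) 0 {#})"
proof -
  let ?J = "{j. A j \<noteq> ezero}"
  have finJ: "finite ?J"
  proof (rule finite_subset[of _ "{..NA}"])
    show "?J \<subseteq> {..NA}" using foA by (auto simp: fo_def)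
  qed auto
  have inner: "(\<Sum>l\<in>{..min j i}. of_nat (j choose l) * emult (A j) ((edx e ^^ (j - l)) (B (i - l))) 0 {#})
      = (if j \<le> i then A j 0 {#} * B (i - j) 0 {#} else 0)" for j
  proof -
    have t: "of_nat (j choose l) * emult (A j) ((edx e ^^ (j - l)) (B (i - l))) 0 {#}
        = (if l = j then A j 0 {#} * B (i - j) 0 {#} else 0)" if l: "l \<in> {..min j i}" for l
    proof -
      have cA: "cst (A j 0)" and cB: "cst (B (i - l) 0)" using A B by (auto simp: okD_def okE_def)
      have "emult (A j) ((edx e ^^ (j - l)) (B (i - l))) 0 {#} = A j 0 {#} * (ser_dx e ^^ (j - l)) (B (i - l) 0) {#}"
        using cA by (simp add: emult_def edx_pow_nth ser_mult_cst_left)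
      also have "\<dots> = (if l = j then A j 0 {#} * B (i - j) 0 {#} else 0)"
        using cB l by (cases "l = j") (simp_all add: ser_dx_pow_cst ser_zero_def)
      finally show ?thesis by simp
    qed
    show ?thesis by (simp add: t sum.delta)
  qed
  have "dop_comp e A B i 0 {#} = (\<Sum>j\<in>?J. if j \<le> i then A j 0 {#} * B (i - j) 0 {#} else 0)"
    unfolding dop_comp_def inner by (rule refl)
  also have "\<dots> = (\<Sum>j\<in>?J \<inter> {..i}. A j 0 {#} * B (i - j) 0 {#})"
    by (subst sum.inter_restrict[OF finJ]) simp
  also have "\<dots> = (\<Sum>j\<le>i. A j 0 {#} * B (i - j) 0 {#})"
  proof (rule sum.mono_neutral_left)
    show "\<forall>j\<in>{..i} - ?J \<inter> {..i}. A j 0 {#} * B (i - j) 0 {#} = 0"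
    proof
      fix j assume "j \<in> {..i} - ?J \<inter> {..i}"
      then have "A j = ezero" by auto
      then show "A j 0 {#} * B (i - j) 0 {#} = 0" by (simp add: ezero_def)
    qed
  qed auto
  finally show ?thesis .
qed

lemma conv_pt: fixes i p q :: nat shows "(\<Sum>j\<le>i. (if j = p then x else 0) * (if i - j = q then y else 0))
    = (if i = p + q then x * y else (0::complex))"
proof -
  have "(\<Sum>j\<le>i. (if j = p then x else 0) * (if i - j = q then y else 0))
      = (\<Sum>j\<le>i. if j = p then (if i - p = q then x * y else 0) else 0)"
    by (rule sum.cong) auto
  also have "\<dots> = (if p \<le> i then (if i - p = q then x * y else 0) else 0)"
    using sum.delta[OF finite_atMost[of i], of p "\<lambda>j. if i - p = q then x * y else 0"] by simp
  also have "\<dots> = (if i = p + q then x * y else 0)" by auto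
  finally show ?thesis .
qed

lemma mul0: "dop_mul a i 0 {#} = (if i = 0 then a 0 {#} else 0)"
  by (simp add: dop_mul_def ezero_def)
lemma D0: "dop_D i 0 {#} = (if i = 1 then 1 else 0)"
  by (simp add: dop_D_def ezero_def eone_def ser_one_def)
lemma scale0: "dop_scale c A i 0 {#} = c * A i 0 {#}"
  by (simp add: dop_scale_def escale_def)
lemma sD0: "dop_scale c dop_D i 0 {#} = (if i = 1 then c else 0)"
  by (simp add: scale0 D0)
lemma eone0: "eone 0 {#} = 1" by (simp add: eone_def ser_one_def)

lemma Ksummand0:
  assumes a: "okE e a" "a 0 {#} = 1" and b: "okE e b" "b 0 {#} = 1"
  shows "dop_comp e (dop_comp e (dop_comp e (dop_comp e
        (dop_mul a) (dop_pow e dop_D 0)) (dop_scale c dop_D)) (dop_pow e (dop_scale (-1) dop_D) 0))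
        (dop_mul b) i 0 {#} = (if i = 1 then c else 0)"
proof -
  define X1 where "X1 = dop_comp e (dop_mul a) (dop_mul eone)"
  define X2 where "X2 = dop_comp e X1 (dop_scale c dop_D)"
  define X3 where "X3 = dop_comp e X2 (dop_mul eone)"
  have okm: "okD e (dop_mul a)" "okD e (dop_mul b)" "okD e (dop_mul eone)"
    using a b by (simp_all add: okD_mul okE_eone)
  have okX1: "okD e X1" unfolding X1_def using okm by (simp add: okD_comp)
  have okX2: "okD e X2" unfolding X2_def using okX1 by (simp add: okD_comp okD_scale okD_D)
  have okX3: "okD e X3" unfolding X3_def using okX2 okm by (simp add: okD_comp)
  have foX1: "fo 0 X1" unfolding X1_def using fo_comp[OF fo_mul fo_mul] by simp
  have foX2: "fo 1 X2" unfolding X2_def using fo_comp[OF foX1 fo_scale[OF fo_D]] by simp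
  have foX3: "fo 1 X3" unfolding X3_def using fo_comp[OF foX2 fo_mul] by simp
  have v1: "X1 i 0 {#} = (if i = 0 then 1 else 0)" for i
    unfolding X1_def comp0[OF fo_mul okm(1) okm(3)] mul0 eone0 a(2) conv_pt by simp
  have v2: "X2 i 0 {#} = (if i = 1 then c else 0)" for i
    unfolding X2_def comp0[OF foX1 okX1 okD_scale[OF okD_D]] sD0 v1 conv_pt by simp
  have v3: "X3 i 0 {#} = (if i = 1 then c else 0)" for i
    unfolding X3_def comp0[OF foX2 okX2 okm(3)] mul0 eone0 v2 conv_pt by simp
  have "dop_comp e X3 (dop_mul b) i 0 {#} = (if i = 1 then c else 0)"
    unfolding comp0[OF foX3 okX3 okm(2)] mul0 b(2) v3 conv_pt by simp
  then show ?thesis unfolding X1_def X2_def X3_def dop_pow_def funpow_0 .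
qed


lemma deriv_var: "ser_deriv x (ser_var e y) m = (if m = {#} \<and> x = y then 1 else 0)"
  by (auto simp: ser_deriv_def ser_var_def ser_uvar_def ser_one_def)

lemma cst_deriv_var: "cst (ser_deriv x (ser_var e y))"
  by (simp add: cst_def deriv_var)

lemma P_E_zero:
  assumes "ser_deriv (e,1) P = ser_zero" "(e,1) \<in># a"
  shows "P a = 0"
proof -
  have "ser_deriv (e,1) P (a - {#(e,1)#}) = ser_zero (a - {#(e,1)#})" using assms(1) by simp
  then have "of_nat (count (a - {#(e,1)#}) (e,1) + 1) * P a = 0"
    unfolding ser_deriv_def ser_zero_def insert_DiffM[OF assms(2)] .
  then show ?thesis by (simp only: mult_eq_0_iff of_nat_eq_0_iff) simp
qed

lemma sub_free:
  assumes "a \<subseteq># r + rep e k" "(e,1) \<notin># a"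
  shows "a \<subseteq># r"
  unfolding subseteq_mset_def
proof
  fix x
  have "count a x \<le> count (r + rep e k) x" using mset_subset_eq_count[OF assms(1), of x] by simp
  then show "count a x \<le> count r x" using assms(2) by (cases "x = (e,1)") (auto simp: not_in_iff)
qed

lemma PV:
  assumes P: "Apol_vxfree e d P" and r: "(e,1) \<notin># r"
  shows "ser_mult P (vxpow e i) (r + rep e k) = P r * (of_int (-i) gchoose k)"
proof -
  have dP: "ser_deriv (e,1) P = ser_zero" using P by (simp add: Apol_vxfree_def)
  have "P a * vxpow e i (r + rep e k - a) = 0" if a: "a \<subseteq># r + rep e k" "a \<noteq> r" for a
  proof (cases "(e,1) \<in># a")
    case True then have "P a = 0" by (rule P_E_zero[OF dP])
    then show ?thesis by simp
  next
    case False
    have ar: "a \<subseteq># r" by (rule sub_free[OF a(1) False])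
    have ra: "a + (r - a) = r" using ar by (rule subset_mset.add_diff_inverse)
    have "r - a \<noteq> {#}"
    proof
      assume "r - a = {#}"
      then show False using ra a(2) by simp
    qed
    then obtain x where x: "x \<in># r - a" by (rule multiset_nonemptyE)
    then have "x \<noteq> (e,1)" using r by (auto dest: in_diffD)
    moreover have "x \<in># r + rep e k - a"
      using x by (simp add: in_diff_count)
    ultimately show ?thesis by (auto simp: vxpow_def)
  qed
  moreover have "r \<subseteq># r + rep e k" by simp
  ultimately have "ser_mult P (vxpow e i) (r + rep e k) = P r * vxpow e i (r + rep e k - r)"
    unfolding ser_mult_def by (rule sum_sub_single)
  then show ?thesis by (simp add: vxpow_def)
qed

lemma slice_rat:
  assumes rep: "rat_rep e d f m P" and r: "(e,1) \<notin># r"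
  shows "f (r + rep e k) = P (int (weight r) - d) r * (of_int (- (int (weight r) - d)) gchoose k)"
proof -
  define i0 where "i0 = int (weight r) - d"
  have Pv: "\<And>i. Apol_vxfree e (d + i) (P i)" using rep by (simp add: rat_rep_def)
  have T: "ser_mult (P i) (vxpow e i) (r + rep e k) = P i r * (of_int (-i) gchoose k)" for i
    using PV[OF Pv r] .
  have sub: "{i. ser_mult (P i) (vxpow e i) (r + rep e k) \<noteq> 0} \<subseteq> {i0}"
  proof
    fix i assume "i \<in> {i. ser_mult (P i) (vxpow e i) (r + rep e k) \<noteq> 0}"
    then have "P i r * (of_int (-i) gchoose k) \<noteq> 0" by (simp only: mem_Collect_eq T) simp
    then have "P i r \<noteq> 0" by auto
    then have "int (weight r) = d + i" using Pv[of i] by (simp add: Apol_vxfree_def)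
    then show "i \<in> {i0}" by (simp add: i0_def)
  qed
  have "f (r + rep e k) = (\<Sum>i\<in>{i. ser_mult (P i) (vxpow e i) (r + rep e k) \<noteq> 0}. ser_mult (P i) (vxpow e i) (r + rep e k))"
    using rep by (simp add: rat_rep_def lsum_def)
  also have "\<dots> = (\<Sum>i\<in>{i0}. ser_mult (P i) (vxpow e i) (r + rep e k))"
    using sub by (intro sum.mono_neutral_left) auto
  also have "\<dots> = ser_mult (P i0) (vxpow e i0) (r + rep e k)" by simp
  also have "\<dots> = P i0 r * (of_int (- i0) gchoose k)" by (rule T)
  finally show ?thesis by (simp add: i0_def)
qed

lemma tame_van:
  assumes rep: "rat_rep e d f m P" and dP: "\<And>i. ser_deriv x (P i) = ser_zero" and x: "x \<noteq> (e,1)"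
  shows "ser_deriv x f = ser_zero"
proof (rule ext)
  fix mo
  let ?M = "add_mset x mo"
  have z: "ser_mult (P i) (vxpow e i) ?M = 0" for i
  proof -
    have "P i a * vxpow e i (?M - a) = 0" if "a \<subseteq># ?M" for a
    proof (cases "x \<in># a")
      case True
      have "ser_deriv x (P i) (a - {#x#}) = 0" using dP by (simp add: ser_zero_def)
      moreover have "count a x \<noteq> 0" using True by simp
      ultimately have "P i a = 0" using True by (simp add: ser_deriv_def)
      then show ?thesis by simp
    next
      case False
      then have "x \<in># ?M - a" by (simp add: in_diff_count not_in_iff)
      then show ?thesis using x by (auto simp: vxpow_def)
    qed
    then show ?thesis unfolding ser_mult_def by (intro sum.neutral) auto
  qed
  have "f ?M = 0" using rep by (simp add: rat_rep_def lsum_def z)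
  then show "ser_deriv x f mo = ser_zero mo" by (simp add: ser_deriv_def ser_zero_def)
qed

definition pp :: "'i \<Rightarrow> int \<Rightarrow> 'i ser \<Rightarrow> 'i ser" where
  "pp e d f mo = (let r = filter_mset (\<lambda>y. y \<noteq> (e,1)) mo; k = count mo (e,1); i0 = int (weight r) - d
     in if i0 \<le> 0 then f r * (of_int (-i0) gchoose k) else 0)"

lemma polpart_rep:
  assumes rep: "rat_rep e d f m P"
  shows "(\<lambda>mo. \<Sum>i\<in>{m..0}. ser_mult (P i) (vxpow e i) mo) = pp e d f"
proof (rule ext)
  fix mo :: "('a \<times> nat) multiset"
  define r where "r = filter_mset (\<lambda>y. y \<noteq> (e,1)) mo"
  define k where "k = count mo (e,1)"
  define i0 where "i0 = int (weight r) - d"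
  have mo: "mo = r + rep e k" unfolding r_def k_def by (rule decomp)
  have r: "(e,1) \<notin># r" by (simp add: r_def)
  have Pv: "\<And>i. Apol_vxfree e (d + i) (P i)" using rep by (simp add: rat_rep_def)
  have T: "ser_mult (P i) (vxpow e i) (r + rep e k) = P i r * (of_int (-i) gchoose k)" for i
    using PV[OF Pv r] .
  have Pz: "P i r = 0" if "i \<noteq> i0" for i
  proof (rule ccontr)
    assume "P i r \<noteq> 0"
    then have "int (weight r) = d + i" using Pv[of i] by (simp add: Apol_vxfree_def)
    then show False using that by (simp add: i0_def)
  qed
  have fr: "f r = P i0 r" using slice_rat[OF rep r, of 0] by (simp add: i0_def)
  have low: "P i r = 0" if "i < m" for i using rep that by (simp add: rat_rep_def ser_zero_def)
  have "(\<Sum>i\<in>{m..0}. ser_mult (P i) (vxpow e i) mo) = (\<Sum>i\<in>{m..0}. if i = i0 then P i0 r * (of_int (-i0) gchoose k) else 0)"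
    unfolding mo T by (rule sum.cong) (auto simp: Pz)
  also have "\<dots> = (if i0 \<in> {m..0} then P i0 r * (of_int (-i0) gchoose k) else 0)"
    by simp
  also have "\<dots> = pp e d f mo"
  proof -
    have "pp e d f mo = (if i0 \<le> 0 then f r * (of_int (-i0) gchoose k) else 0)"
      by (simp add: pp_def Let_def r_def k_def i0_def)
    then show ?thesis using fr low[of i0] by auto
  qed
  finally show "(\<Sum>i\<in>{m..0}. ser_mult (P i) (vxpow e i) mo) = pp e d f mo" .
qed

lemma polpart_eq:
  assumes rep: "rat_rep e d f m P"
  shows "polpart e d f = pp e d f"
  unfolding polpart_def
proof (rule the_equality)
  show "\<exists>m P. rat_rep e d f m P \<and> pp e d f = (\<lambda>mo. \<Sum>i\<in>{m..0}. ser_mult (P i) (vxpow e i) mo)"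
    by (intro exI[of _ m] exI[of _ P]) (simp add: rep polpart_rep[OF rep])
next
  fix g assume "\<exists>m P. rat_rep e d f m P \<and> g = (\<lambda>mo. \<Sum>i\<in>{m..0}. ser_mult (P i) (vxpow e i) mo)"
  then obtain m' P' where "rat_rep e d f m' P'" "g = (\<lambda>mo. \<Sum>i\<in>{m'..0}. ser_mult (P' i) (vxpow e i) mo)"
    by blast
  then show "g = pp e d f" by (simp add: polpart_rep)
qed

lemma NP_w:
  assumes rep: "rat_rep e d f m P" and pz: "polpart e d f = ser_zero"
    and d0: "ser_deriv (e,0) f = ser_zero"
  shows "NP e f"
  unfolding NP_def
proof (intro conjI allI impI)
  fix mo :: "'a mono" assume mo: "(e,0) \<in># mo"
  have "ser_deriv (e,0) f (mo - {#(e,0)#}) = ser_zero (mo - {#(e,0)#})" using d0 by simp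
  then have "of_nat (count (mo - {#(e,0)#}) (e,0) + 1) * f mo = 0"
    unfolding ser_deriv_def ser_zero_def insert_DiffM[OF mo] .
  then show "f mo = 0" by (simp only: mult_eq_0_iff of_nat_eq_0_iff) simp
next
  fix r :: "'a mono" assume r: "(e,1) \<notin># r"
  define i0 where "i0 = int (weight r) - d"
  have sl: "slice e f r = fps_const (P i0 r) * fps_binomial (of_int (- i0))"
    by (rule fps_ext) (simp only: slice_nth slice_rat[OF rep r] fps_mult_left_const_nth fps_binomial_nth i0_def)
  show "npf (slice e f r)"
  proof (cases "i0 \<le> 0")
    case True
    have "pp e d f r = 0" using pz polpart_eq[OF rep] by (simp add: ser_zero_def)
    moreover have "filter_mset (\<lambda>y. y \<noteq> (e,1)) r = r" using r by (auto simp: multiset_eq_iff not_in_iff)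
    ultimately have "f r = 0" using True r by (simp add: pp_def Let_def i0_def not_in_iff)
    moreover have "f r = P i0 r" using slice_rat[OF rep r, of 0] by (simp add: i0_def)
    ultimately show ?thesis using sl by (simp add: npf_zero)
  next
    case False
    then have "(of_int i0 :: complex) = of_nat (nat i0)" by simp
    moreover have "1 \<le> nat i0" using False by simp
    ultimately show ?thesis using sl npf_binom[of "nat i0" "P i0 r"] by simp
  qed
qed


lemma w0: "rational_miura e w \<Longrightarrow> w \<alpha> 0 = ser_var e (\<alpha>, 0)"
  by (simp add: rational_miura_def)

lemma wrep: "rational_miura e w \<Longrightarrow> 1 \<le> n \<Longrightarrow> \<exists>m P. rat_rep e (int n) (w \<alpha> n) m P \<and> tame_rep P"
  by (simp add: rational_miura_def rat_tame_def)

lemma ederiv0: "rational_miura e w \<Longrightarrow> ederiv x (w \<alpha>) 0 = (\<lambda>m. if m = {#} \<and> x = (\<alpha>,0) then 1 else 0)"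
  by (rule ext) (simp add: ederiv_def w0 deriv_var)

lemma wNP:
  assumes miura: "rational_miura e w"
    and pol: "\<forall>\<alpha> n. polpart e (int n) (w \<alpha> n) = (if n = 0 then ser_var e (\<alpha>, 0) else ser_zero)"
    and dv1: "\<forall>\<alpha>. ederiv (e, 0) (w \<alpha>) = (if \<alpha> = e then eone else ezero)"
    and n: "1 \<le> n"
  shows "NP e (w \<alpha> n)"
proof -
  obtain m P where rep: "rat_rep e (int n) (w \<alpha> n) m P" using wrep[OF miura n] by blast
  have "polpart e (int n) (w \<alpha> n) = ser_zero" using pol n by simp
  moreover have "ser_deriv (e,0) (w \<alpha> n) = ser_zero"
  proof -
    have "ederiv (e,0) (w \<alpha>) n = ser_zero" using dv1 n
      by (simp add: eone_def ezero_def ser_zero_def)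
    then show ?thesis by (simp add: ederiv_def)
  qed
  ultimately show ?thesis using NP_w[OF rep] by blast
qed

lemma okw:
  assumes miura: "rational_miura e w"
    and pol: "\<forall>\<alpha> n. polpart e (int n) (w \<alpha> n) = (if n = 0 then ser_var e (\<alpha>, 0) else ser_zero)"
    and dv1: "\<forall>\<alpha>. ederiv (e, 0) (w \<alpha>) = (if \<alpha> = e then eone else ezero)"
  shows "okE e (ederiv x (w \<alpha>))"
  unfolding okE_def
proof (intro conjI allI impI)
  show "cst (ederiv x (w \<alpha>) 0)" using miura by (simp add: ederiv0 cst_def)
next
  fix n :: nat assume "1 \<le> n"
  then show "NP e (ederiv x (w \<alpha>) n)"
    using wNP[OF miura pol dv1] by (simp add: ederiv_def NP_deriv)
qed

lemma vanw:
  assumes miura: "rational_miura e w"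
  shows "\<exists>C. \<forall>p>C. \<forall>\<mu>. van n (ederiv (\<mu>, p) (w \<alpha>))"
proof (induction n)
  case 0
  have "van 0 (ederiv (\<mu>, p) (w \<alpha>))" if "0 < p" for p \<mu>
    using that miura by (simp add: van_def ederiv0 ser_zero_def)
  then show ?case by blast
next
  case (Suc n)
  obtain C1 where C1: "\<forall>p>C1. \<forall>\<mu>. van n (ederiv (\<mu>, p) (w \<alpha>))" using Suc by blast
  obtain m P where rep: "rat_rep e (int (Suc n)) (w \<alpha> (Suc n)) m P" and tP: "tame_rep P"
    using wrep[OF miura, of "Suc n" \<alpha>] by auto
  obtain C2 where C2: "\<forall>i \<alpha>' k. k > C2 \<longrightarrow> ser_deriv (\<alpha>',k) (P i) = ser_zero"
    using tP by (auto simp: tame_rep_def)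
  have "van (Suc n) (ederiv (\<mu>, p) (w \<alpha>))" if p: "p > max C1 (max C2 1)" for p \<mu>
    unfolding van_def
  proof (intro allI impI)
    fix j assume j: "j \<le> Suc n"
    show "ederiv (\<mu>, p) (w \<alpha>) j = ser_zero"
    proof (cases "j \<le> n")
      case True then show ?thesis using C1 p by (auto simp: van_def)
    next
      case False
      then have "j = Suc n" using j by simp
      moreover have "ser_deriv (\<mu>, p) (w \<alpha> (Suc n)) = ser_zero"
        using p C2 by (intro tame_van[OF rep]) auto
      ultimately show ?thesis by (simp add: ederiv_def)
    qed
  qed
  then show ?case by blast
qed


lemma Kop0:
  assumes miura: "rational_miura e w"
    and pol: "\<forall>\<alpha> n. polpart e (int n) (w \<alpha> n) = (if n = 0 then ser_var e (\<alpha>, 0) else ser_zero)"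
    and dv1: "\<forall>\<alpha>. ederiv (e, 0) (w \<alpha>) = (if \<alpha> = e then eone else ezero)"
  shows "Kop e \<eta> w \<alpha> \<beta> i 0 = (\<lambda>m. if m = {#} \<and> i = 1 then \<eta> \<alpha> \<beta> else 0)"
proof (rule ext)
  fix m
  let ?t0 = "(0::nat, 0::nat, \<alpha>, \<beta>)"
  have ok: "okD e (Ksummand e \<eta> w \<alpha> \<beta> t)" for t
    using okw[OF miura pol dv1] by (intro okD_Ksummand)
  have zero: "Ksummand e \<eta> w \<alpha> \<beta> t i 0 = ser_zero" if "t \<noteq> ?t0" for t
  proof -
    obtain p q \<mu> \<nu> where t: "t = (p, q, \<mu>, \<nu>)" by (cases t) auto
    have "(\<mu>, p) \<noteq> (\<alpha>, 0) \<or> (\<nu>, q) \<noteq> (\<beta>, 0)" using that t by auto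
    then have "van 0 (ederiv (\<mu>, p) (w \<alpha>)) \<or> van 0 (ederiv (\<nu>, q) (w \<beta>))"
      using miura by (auto simp: van_def ederiv0 ser_zero_def)
    then have "vanD 0 (Ksummand e \<eta> w \<alpha> \<beta> (p, q, \<mu>, \<nu>))" by (rule vanD_Ksummand)
    then show ?thesis using t by (simp add: vanD_def van_def)
  qed
  have a1: "ederiv (\<alpha>, 0) (w \<alpha>) 0 {#} = 1" "ederiv (\<beta>, 0) (w \<beta>) 0 {#} = 1"
    using miura by (simp_all add: ederiv0)
  have K0: "Ksummand e \<eta> w \<alpha> \<beta> ?t0 i 0 m = (if m = {#} \<and> i = 1 then \<eta> \<alpha> \<beta> else 0)"
  proof (cases "m = {#}")
    case True
    have "Ksummand e \<eta> w \<alpha> \<beta> ?t0 i 0 {#} = (if i = 1 then \<eta> \<alpha> \<beta> else 0)"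
      unfolding Ksummand_def prod.case
      by (rule Ksummand0[OF okw[OF miura pol dv1] a1(1) okw[OF miura pol dv1] a1(2)])
    then show ?thesis using True by simp
  next
    case False
    have "cst (Ksummand e \<eta> w \<alpha> \<beta> ?t0 i 0)" using ok by (simp add: okD_def okE_def)
    then show ?thesis using False by (simp add: cst_def)
  qed
  have sub: "{t. Ksummand e \<eta> w \<alpha> \<beta> t i 0 m \<noteq> 0} \<subseteq> {?t0}"
  proof
    fix t assume t: "t \<in> {t. Ksummand e \<eta> w \<alpha> \<beta> t i 0 m \<noteq> 0}"
    show "t \<in> {?t0}"
    proof (rule ccontr)
      assume "t \<notin> {?t0}"
      then have "Ksummand e \<eta> w \<alpha> \<beta> t i 0 = ser_zero" using zero by blast
      then show False using t by (simp add: ser_zero_def)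
    qed
  qed
  have "Kop e \<eta> w \<alpha> \<beta> i 0 m = (\<Sum>t\<in>{t. Ksummand e \<eta> w \<alpha> \<beta> t i 0 m \<noteq> 0}. Ksummand e \<eta> w \<alpha> \<beta> t i 0 m)"
    by (simp add: Kop_def lsum_def)
  also have "\<dots> = (\<Sum>t\<in>{?t0}. Ksummand e \<eta> w \<alpha> \<beta> t i 0 m)"
    using sub by (intro sum.mono_neutral_left) auto
  also have "\<dots> = (if m = {#} \<and> i = 1 then \<eta> \<alpha> \<beta> else 0)" using K0 by simp
  finally show "Kop e \<eta> w \<alpha> \<beta> i 0 m = (if m = {#} \<and> i = 1 then \<eta> \<alpha> \<beta> else 0)" .
qed

lemma KopNP:
  fixes \<eta> :: "'i::finite \<Rightarrow> 'i \<Rightarrow> complex" and e :: 'i and w :: "'i \<Rightarrow> 'i eser"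
  assumes miura: "rational_miura e w"
    and pol: "\<forall>\<alpha> n. polpart e (int n) (w \<alpha> n) = (if n = 0 then ser_var e (\<alpha>, 0) else ser_zero)"
    and dv1: "\<forall>\<alpha>. ederiv (e, 0) (w \<alpha>) = (if \<alpha> = e then eone else ezero)"
    and n: "1 \<le> n"
  shows "NP e (Kop e \<eta> w \<alpha> \<beta> i n)"
proof -
  obtain C1 where C1: "\<forall>p>C1. \<forall>\<mu>. van n (ederiv (\<mu>, p) (w \<alpha>))" using vanw[OF miura] by blast
  obtain C2 where C2: "\<forall>p>C2. \<forall>\<mu>. van n (ederiv (\<mu>, p) (w \<beta>))" using vanw[OF miura] by blast
  define C where "C = max C1 C2"
  define T where "T = {..C} \<times> {..C} \<times> (UNIV :: 'i set) \<times> (UNIV :: 'i set)"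
  have finT: "finite T" by (simp add: T_def)
  have ok: "okD e (Ksummand e \<eta> w \<alpha> \<beta> t)" for t
    using okw[OF miura pol dv1] by (intro okD_Ksummand)
  have zero: "Ksummand e \<eta> w \<alpha> \<beta> t i n = ser_zero" if "t \<notin> T" for t
  proof -
    obtain p q \<mu> \<nu> where t: "t = (p, q, \<mu>, \<nu>)" by (cases t) auto
    have "p > C \<or> q > C" using that t by (auto simp: T_def)
    then have "van n (ederiv (\<mu>, p) (w \<alpha>)) \<or> van n (ederiv (\<nu>, q) (w \<beta>))"
      using C1 C2 by (auto simp: C_def)
    then have "vanD n (Ksummand e \<eta> w \<alpha> \<beta> (p, q, \<mu>, \<nu>))" by (rule vanD_Ksummand)
    then show ?thesis using t by (simp add: vanD_def van_def)
  qed
  have eq: "Kop e \<eta> w \<alpha> \<beta> i n = (\<lambda>m. \<Sum>t\<in>T. Ksummand e \<eta> w \<alpha> \<beta> t i n m)"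
  proof (rule ext)
    fix m
    have sub: "{t. Ksummand e \<eta> w \<alpha> \<beta> t i n m \<noteq> 0} \<subseteq> T"
    proof
      fix t assume t: "t \<in> {t. Ksummand e \<eta> w \<alpha> \<beta> t i n m \<noteq> 0}"
      show "t \<in> T"
      proof (rule ccontr)
        assume "t \<notin> T"
        then have "Ksummand e \<eta> w \<alpha> \<beta> t i n = ser_zero" using zero by blast
        then show False using t by (simp add: ser_zero_def)
      qed
    qed
    have "Kop e \<eta> w \<alpha> \<beta> i n m = (\<Sum>t\<in>{t. Ksummand e \<eta> w \<alpha> \<beta> t i n m \<noteq> 0}. Ksummand e \<eta> w \<alpha> \<beta> t i n m)"
      by (simp add: Kop_def lsum_def)
    also have "\<dots> = (\<Sum>t\<in>T. Ksummand e \<eta> w \<alpha> \<beta> t i n m)"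
      using sub finT by (intro sum.mono_neutral_left) auto
    finally show "Kop e \<eta> w \<alpha> \<beta> i n m = (\<Sum>t\<in>T. Ksummand e \<eta> w \<alpha> \<beta> t i n m)" .
  qed
  show ?thesis unfolding eq
    using ok n by (intro NP_sum) (auto simp: okD_def okE_def)
qed


definition eval0 :: "'i \<Rightarrow> 'i mono \<Rightarrow> 'i mono \<Rightarrow> complex" where
  "eval0 e \<mu> m = (if filter_mset (\<lambda>y. y \<noteq> (e,1)) \<mu> = filter_mset (\<lambda>y. y \<noteq> (e,1)) m
     then of_nat (count \<mu> (e,1) choose count m (e,1)) else 0)"

lemma ser_dx_var: "ser_dx e (ser_var e (\<alpha>, k)) = ser_var e (\<alpha>, Suc k)"
proof (rule ext)
  fix m :: "'a mono"
  let ?S = "{x. x \<in># m \<and> 1 \<le> snd x}"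
  let ?x0 = "(\<alpha>, Suc k)"
  have g: "ser_deriv (fst x, snd x - 1) (ser_var e (\<alpha>, k)) (m - {#x#})
      = (if x = ?x0 then (if m = {#?x0#} then 1 else 0) else 0)" if x: "x \<in> ?S" for x
  proof -
    obtain a b where ab: "x = (a, b)" by (cases x)
    have "m - {#x#} = {#} \<longleftrightarrow> m = {#x#}" using x
      by (metis (mono_tags, lifting) diff_single_eq_union diff_empty mem_Collect_eq add_mset_diff_bothsides)
    then show ?thesis using x ab by (auto simp: deriv_var)
  qed
  have "(\<Sum>x\<in>?S. ser_deriv (fst x, snd x - 1) (ser_var e (\<alpha>, k)) (m - {#x#}))
      = (\<Sum>x\<in>?S. if x = ?x0 then (if m = {#?x0#} then 1 else 0) else 0)"
    by (rule sum.cong[OF refl]) (rule g)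
  also have "\<dots> = (if m = {#?x0#} then 1 else 0)"
  proof -
    have fin: "finite ?S" by (rule finite_subset[of _ "set_mset m"]) auto
    show ?thesis using sum.delta'[OF fin, of ?x0 "\<lambda>_. if m = {#?x0#} then 1 else (0::complex)"]
      by auto
  qed
  finally have sumeq: "(\<Sum>x\<in>?S. ser_deriv (fst x, snd x - 1) (ser_var e (\<alpha>, k)) (m - {#x#}))
      = (if m = {#?x0#} then 1 else 0)" .
  have "ser_dx e (ser_var e (\<alpha>, k)) m = (\<Sum>x\<in>?S. ser_deriv (fst x, snd x - 1) (ser_var e (\<alpha>, k)) (m - {#x#}))
      + ser_deriv (e,0) (ser_var e (\<alpha>, k)) m"
    by (simp only: ser_dx_def)
  also have "\<dots> = (if m = {#?x0#} then 1 else 0) + (if m = {#} \<and> (e,0) = (\<alpha>, k) then 1 else 0)"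
    by (subst sumeq) (simp only: deriv_var)
  also have "\<dots> = ser_var e (\<alpha>, Suc k) m"
    by (auto simp: ser_var_def ser_uvar_def ser_one_def)
  finally show "ser_dx e (ser_var e (\<alpha>, k)) m = ser_var e (\<alpha>, Suc k) m" .
qed

lemma edx_pow_w0:
  assumes miura: "rational_miura e w"
  shows "(edx e ^^ k) (w \<alpha>) 0 = ser_var e (\<alpha>, k)"
proof (induction k)
  case 0 then show ?case using miura by (simp add: w0)
next
  case (Suc k) then show ?case by (simp add: edx_def ser_dx_var)
qed

lemma ser_mult_var:
  "ser_mult (ser_var e x) F m = (if x \<in># m then F (m - {#x#}) else 0) + (if x = (e,1) then F m else 0)"
proof -
  have "ser_mult (ser_var e x) F m = ser_mult (ser_uvar x) F m + (if x = (e,1) then ser_mult ser_one F m else 0)"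
    by (simp add: ser_mult_def ser_var_def distrib_right sum.distrib)
  moreover have "ser_mult ser_one F m = F m"
    by (subst ser_mult_cst_left[OF cst_one]) (simp add: ser_one_def)
  ultimately show ?thesis by (simp add: ser_mult_uvar_left)
qed

lemma eval0_step:
  "eval0 e (add_mset x \<mu>) m = (if x \<in># m then eval0 e \<mu> (m - {#x#}) else 0) + (if x = (e,1) then eval0 e \<mu> m else 0)"
proof (cases "x = (e,1)")
  case False
  have f: "filter_mset (\<lambda>y. y \<noteq> (e,1)) (add_mset x \<mu>) = add_mset x (filter_mset (\<lambda>y. y \<noteq> (e,1)) \<mu>)"
    using False by simp
  have c: "count (add_mset x \<mu>) (e,1) = count \<mu> (e,1)" using False by simp
  show ?thesis
  proof (cases "x \<in># m")
    case True
    have fm: "filter_mset (\<lambda>y. y \<noteq> (e,1)) (m - {#x#}) = filter_mset (\<lambda>y. y \<noteq> (e,1)) m - {#x#}"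
      using False by (auto simp: multiset_eq_iff)
    have cm: "count (m - {#x#}) (e,1) = count m (e,1)" using False by simp
    have xin: "x \<in># filter_mset (\<lambda>y. y \<noteq> (e,1)) m" using True False by simp
    have "(add_mset x (filter_mset (\<lambda>y. y \<noteq> (e,1)) \<mu>) = filter_mset (\<lambda>y. y \<noteq> (e,1)) m)
        \<longleftrightarrow> (filter_mset (\<lambda>y. y \<noteq> (e,1)) \<mu> = filter_mset (\<lambda>y. y \<noteq> (e,1)) m - {#x#})"
      using xin by (metis add_mset_remove_trivial insert_DiffM)
    then show ?thesis using True False by (simp add: eval0_def f c fm cm)
  next
    case nm: False
    have "x \<notin># filter_mset (\<lambda>y. y \<noteq> (e,1)) m" using nm by simp
    then have "add_mset x (filter_mset (\<lambda>y. y \<noteq> (e,1)) \<mu>) \<noteq> filter_mset (\<lambda>y. y \<noteq> (e,1)) m"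
      by (metis union_single_eq_member)
    then show ?thesis using nm False by (simp add: eval0_def f)
  qed
next
  case True
  have f: "filter_mset (\<lambda>y. y \<noteq> (e,1)) (add_mset x \<mu>) = filter_mset (\<lambda>y. y \<noteq> (e,1)) \<mu>"
    using True by simp
  have c: "count (add_mset x \<mu>) (e,1) = Suc (count \<mu> (e,1))" using True by simp
  show ?thesis
  proof (cases "x \<in># m")
    case xm: True
    have fm: "filter_mset (\<lambda>y. y \<noteq> (e,1)) (m - {#x#}) = filter_mset (\<lambda>y. y \<noteq> (e,1)) m"
      using True by (auto simp: multiset_eq_iff)
    obtain k where k: "count m (e,1) = Suc k" using xm True by (metis count_greater_zero_iff gr0_implies_Suc)
    have cm: "count (m - {#x#}) (e,1) = k" using True k by simp
    show ?thesis using xm True k by (simp add: eval0_def f c fm cm)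
  next
    case nm: False
    have "count m (e,1) = 0" using nm True by (simp add: not_in_iff)
    then show ?thesis using nm True by (simp add: eval0_def f c)
  qed
qed

lemma emprod0:
  assumes miura: "rational_miura e w"
  shows "emprod e w xs 0 = eval0 e (mset xs)"
proof (induction xs)
  case Nil
  show ?case
  proof (rule ext)
    fix m :: "'a mono"
    have "filter_mset (\<lambda>y. y \<noteq> (e,1)) m = {#} \<and> count m (e,1) = 0 \<longleftrightarrow> m = {#}"
      by (auto simp: multiset_eq_iff) (metis count_filter_mset)
    then show "emprod e w [] 0 m = eval0 e (mset []) m"
      by (auto simp: emprod_def eone_def ser_one_def eval0_def)
  qed
next
  case (Cons x xs)
  show ?case
  proof (rule ext)
    fix m
    have "emprod e w (x # xs) 0 m = ser_mult ((edx e ^^ snd x) (w (fst x)) 0) (emprod e w xs 0) m"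
      by (simp add: emprod_def emult_def)
    also have "\<dots> = ser_mult (ser_var e x) (eval0 e (mset xs)) m"
      using miura Cons by (simp add: edx_pow_w0)
    also have "\<dots> = eval0 e (mset (x # xs)) m"
      by (simp add: ser_mult_var eval0_step)
    finally show "emprod e w (x # xs) 0 m = eval0 e (mset (x # xs)) m" .
  qed
qed

lemma emono0:
  assumes miura: "rational_miura e w"
  shows "emono e w \<mu> 0 = eval0 e \<mu>"
proof -
  have "mset (SOME xs. mset xs = \<mu>) = \<mu>" by (rule someI_ex) (rule ex_mset)
  then show ?thesis unfolding emono_def using emprod0[OF miura] by metis
qed

lemma emono_empty: "emono e w {#} = eone"
  by (simp add: emono_def emprod_def)


lemma filter_free: "(e,1) \<notin># r \<Longrightarrow> filter_mset (\<lambda>y. y \<noteq> (e,1)) r = r"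
  by (auto simp: multiset_eq_iff not_in_iff)

lemma filter_rep: "(e,1) \<notin># r \<Longrightarrow> filter_mset (\<lambda>y. y \<noteq> (e,1)) (r + rep e c) = r"
  by (auto simp: multiset_eq_iff not_in_iff)

lemma count_rep: "(e,1) \<notin># r \<Longrightarrow> count (r + rep e c) (e,1) = c"
  by (simp add: not_in_iff)

lemma eval0_rep: assumes "(e,1) \<notin># r" shows "eval0 e (r + rep e c) (r + rep e k) = of_nat (c choose k)"
  unfolding eval0_def filter_rep[OF assms] count_rep[OF assms] by simp

lemma poly_slice:
  fixes Gn :: "'i ser" and Kn :: "'i ser"
  assumes fin: "finite {filter_mset (\<lambda>x. snd x > 0) \<mu> | \<mu>. Gn \<mu> \<noteq> 0}"
    and K: "\<And>m. Kn m = (\<Sum>\<mu>\<in>{\<mu>. Gn \<mu> * eval0 e \<mu> m \<noteq> 0}. Gn \<mu> * eval0 e \<mu> m)"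
    and r: "(e,1) \<notin># r"
  shows "finite {c. Gn (r + rep e c) \<noteq> 0}"
    and "slice e Kn r = (\<Sum>c\<in>{c. Gn (r + rep e c) \<noteq> 0}. fps_const (Gn (r + rep e c)) * (1 + fps_X) ^ c)"
proof -
  define C where "C = {c. Gn (r + rep e c) \<noteq> 0}"
  define f where "f c = filter_mset (\<lambda>x. snd x > 0) (r + rep e c)" for c
  have injf: "inj_on f C"
  proof
    fix c c' assume "f c = f c'"
    then have "count (f c) (e,1) = count (f c') (e,1)" by simp
    then show "c = c'" using r by (simp add: f_def not_in_iff)
  qed
  have "f ` C \<subseteq> {filter_mset (\<lambda>x. snd x > 0) \<mu> | \<mu>. Gn \<mu> \<noteq> 0}"
  proof
    fix y assume "y \<in> f ` C"
    then obtain c where "c \<in> C" "y = f c" by auto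
    then show "y \<in> {filter_mset (\<lambda>x. snd x > 0) \<mu> | \<mu>. Gn \<mu> \<noteq> 0}"
      unfolding C_def f_def by blast
  qed
  then have "finite (f ` C)" using fin by (rule finite_subset)
  then show finC: "finite {c. Gn (r + rep e c) \<noteq> 0}"
    using injf finite_imageD by (auto simp: C_def)
  show "slice e Kn r = (\<Sum>c\<in>{c. Gn (r + rep e c) \<noteq> 0}. fps_const (Gn (r + rep e c)) * (1 + fps_X) ^ c)"
  proof (rule fps_ext)
    fix k
    define g where "g \<mu> = Gn \<mu> * eval0 e \<mu> (r + rep e k)" for \<mu>
    define A2 where "A2 = (\<lambda>c. r + rep e c) ` C"
    have finA2: "finite A2" using finC by (simp add: A2_def C_def)
    have sub: "{\<mu>. g \<mu> \<noteq> 0} \<subseteq> A2"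
    proof
      fix \<mu> assume "\<mu> \<in> {\<mu>. g \<mu> \<noteq> 0}"
      then have G: "Gn \<mu> \<noteq> 0" and ev: "eval0 e \<mu> (r + rep e k) \<noteq> 0" by (auto simp: g_def)
      have "filter_mset (\<lambda>y. y \<noteq> (e,1)) \<mu> = filter_mset (\<lambda>y. y \<noteq> (e,1)) (r + rep e k)"
        using ev unfolding eval0_def by meson
      then have "filter_mset (\<lambda>y. y \<noteq> (e,1)) \<mu> = r" by (simp only: filter_rep[OF r])
      then have mu: "\<mu> = r + rep e (count \<mu> (e,1))" using decomp[of \<mu> e] by simp
      then have "count \<mu> (e,1) \<in> C" using G by (auto simp: C_def)
      then show "\<mu> \<in> A2" using mu by (auto simp: A2_def)
    qed
    have injA: "inj_on (\<lambda>c. r + rep e c) C"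
      by (rule inj_onI) (metis add_left_cancel count_replicate_mset)
    have "slice e Kn r $ k = (\<Sum>\<mu>\<in>{\<mu>. g \<mu> \<noteq> 0}. g \<mu>)"
      by (simp add: K g_def)
    also have "\<dots> = (\<Sum>\<mu>\<in>A2. g \<mu>)"
      using sub finA2 by (intro sum.mono_neutral_left) auto
    also have "\<dots> = (\<Sum>c\<in>C. g (r + rep e c))"
      unfolding A2_def by (rule sum.reindex[OF injA, unfolded comp_def])
    also have "\<dots> = (\<Sum>c\<in>C. Gn (r + rep e c) * of_nat (c choose k))"
      by (simp only: g_def eval0_rep[OF r])
    also have "\<dots> = (\<Sum>c\<in>C. fps_const (Gn (r + rep e c)) * (1 + fps_X) ^ c) $ k"
      by (simp add: fps_sum_nth onepX_nth)
    finally show "slice e Kn r $ k = (\<Sum>c\<in>{c. Gn (r + rep e c) \<noteq> 0}. fps_const (Gn (r + rep e c)) * (1 + fps_X) ^ c) $ k"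
      by (simp add: C_def)
  qed
qed


lemma main_G:
  fixes \<eta> :: "'i::finite \<Rightarrow> 'i \<Rightarrow> complex" and e :: 'i and w :: "'i \<Rightarrow> 'i eser"
  assumes miura: "rational_miura e w"
    and pol: "\<forall>\<alpha> n. polpart e (int n) (w \<alpha> n) = (if n = 0 then ser_var e (\<alpha>, 0) else ser_zero)"
    and dv1: "\<forall>\<alpha>. ederiv (e, 0) (w \<alpha>) = (if \<alpha> = e then eone else ezero)"
    and rx: "expressible_in_w e w (Kop e \<eta> w \<alpha> \<beta> i)"
    and n1: "1 \<le> n"
  shows "Kop e \<eta> w \<alpha> \<beta> i n m = 0"
proof -
  define K where "K = Kop e \<eta> w \<alpha> \<beta> i"
  obtain G where inA: "in_Ahat G" and finS: "\<forall>n m. finite (subst_terms e w G n m)"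
    and Kdef: "K = (\<lambda>n m. \<Sum>(j, \<mu>)\<in>subst_terms e w G n m. G j \<mu> * emono e w \<mu> (n - j) m)"
    using rx by (auto simp: expressible_in_w_def K_def)
  have Kn: "K n m = (\<Sum>\<mu>\<in>{\<mu>. G n \<mu> * eval0 e \<mu> m \<noteq> 0}. G n \<mu> * eval0 e \<mu> m)"
    if IH: "\<forall>j<n. \<forall>\<mu>. (j = 0 \<and> \<mu> = {#}) \<or> G j \<mu> = 0" for n m
  proof -
    let ?A = "{\<mu>. G n \<mu> * eval0 e \<mu> m \<noteq> 0}"
    have S: "subst_terms e w G n m = Pair n ` ?A"
    proof
      show "subst_terms e w G n m \<subseteq> Pair n ` ?A"
      proof
        fix p assume p: "p \<in> subst_terms e w G n m"
        obtain j \<mu> where pj: "p = (j, \<mu>)" by (cases p)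
        have jn: "j \<le> n" and nz: "G j \<mu> * emono e w \<mu> (n - j) m \<noteq> 0"
          using p pj by (auto simp: subst_terms_def)
        have "j = n"
        proof (rule ccontr)
          assume "j \<noteq> n"
          then have "j < n" using jn by simp
          then have "(j = 0 \<and> \<mu> = {#}) \<or> G j \<mu> = 0" using IH by blast
          moreover have "G j \<mu> \<noteq> 0" using nz by auto
          ultimately have "j = 0" "\<mu> = {#}" by auto
          then have "emono e w \<mu> (n - j) m = 0" using \<open>j < n\<close>
            by (simp add: emono_empty eone_def ser_zero_def)
          then show False using nz by simp
        qed
        then show "p \<in> Pair n ` ?A" using pj nz by (auto simp: emono0[OF miura])
      qed
    next
      show "Pair n ` ?A \<subseteq> subst_terms e w G n m"
        by (auto simp: subst_terms_def emono0[OF miura])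
    qed
    have "K n m = (\<Sum>p\<in>Pair n ` ?A. (case p of (j, \<mu>) \<Rightarrow> G j \<mu> * emono e w \<mu> (n - j) m))"
      by (simp add: Kdef S)
    also have "\<dots> = (\<Sum>\<mu>\<in>?A. G n \<mu> * emono e w \<mu> 0 m)"
      by (subst sum.reindex) (auto simp: inj_on_def)
    also have "\<dots> = (\<Sum>\<mu>\<in>?A. G n \<mu> * eval0 e \<mu> m)"
      by (simp add: emono0[OF miura])
    finally show ?thesis .
  qed
  have Q: "\<forall>\<mu>. (n = 0 \<and> \<mu> = {#}) \<or> G n \<mu> = 0" for n
  proof (induction n rule: less_induct)
    case (less n)
    have fin: "finite {filter_mset (\<lambda>x. snd x > 0) \<mu> | \<mu>. G n \<mu> \<noteq> 0}"
      using inA by (simp add: in_Ahat_def)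
    have Kn': "\<And>m. K n m = (\<Sum>\<mu>\<in>{\<mu>. G n \<mu> * eval0 e \<mu> m \<noteq> 0}. G n \<mu> * eval0 e \<mu> m)"
      using Kn less.IH by blast
    show ?case
    proof (rule allI, rule ccontr)
      fix \<mu> assume H: "\<not> ((n = 0 \<and> \<mu> = {#}) \<or> G n \<mu> = 0)"
      define r where "r = filter_mset (\<lambda>y. y \<noteq> (e,1)) \<mu>"
      define c where "c = count \<mu> (e,1)"
      have mu: "\<mu> = r + rep e c" unfolding r_def c_def by (rule decomp)
      have r: "(e,1) \<notin># r" by (simp add: r_def)
      have Gnz: "G n (r + rep e c) \<noteq> 0" using H mu by simp
      define C where "C = {c. G n (r + rep e c) \<noteq> 0}"
      have finC: "finite C" unfolding C_def by (rule poly_slice(1)[OF fin Kn' r])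
      have sl: "slice e (K n) r = (\<Sum>c\<in>C. fps_const (G n (r + rep e c)) * (1 + fps_X) ^ c)"
        unfolding C_def by (rule poly_slice(2)[OF fin Kn' r])
      have cC: "c \<in> C" using Gnz by (simp add: C_def)
      show False
      proof (cases "n = 0")
        case True
        define b where "b = (if r = {#} then 1 else (0::nat))"
        have K0: "K 0 = (\<lambda>m. if m = {#} \<and> i = 1 then \<eta> \<alpha> \<beta> else 0)"
          unfolding K_def by (rule Kop0[OF miura pol dv1])
        have "fdeg_lt (slice e (K n) r * (1 + fps_X) ^ 0) (0 + b)"
          unfolding fdeg_lt_def
        proof (intro allI impI)
          fix j assume j: "0 + b \<le> j"
          have "r + rep e j \<noteq> {#}" using j by (auto simp: b_def split: if_splits)
          then show "(slice e (K n) r * (1 + fps_X) ^ 0) $ j = 0" using True by (auto simp: K0)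
        qed
        then have "fdeg_lt ((\<Sum>c\<in>C. fps_const (G n (r + rep e c)) * (1 + fps_X) ^ c) * (1 + fps_X) ^ 0) (0 + b)"
          by (simp only: sl)
        moreover have "b \<le> c"
        proof (cases "r = {#}")
          case True
          then have "\<mu> \<noteq> {#}" using H \<open>n = 0\<close> by auto
          then have "c \<noteq> 0" using mu True by auto
          then show ?thesis by (simp add: b_def)
        qed (simp add: b_def)
        ultimately have "G n (r + rep e c) = 0"
          using poly_coeffs_zero[OF finC _ cC, of "\<lambda>c. G n (r + rep e c)"] by blast
        then show False using Gnz by simp
      next
        case False
        then have "NP e (K n)" unfolding K_def by (intro KopNP[OF miura pol dv1]) simp
        then have "npf (slice e (K n) r)" using r by (rule NP_slice)
        then obtain M where "npf_at (slice e (K n) r) M" by (auto simp: npf_def)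
        then have "fdeg_lt ((\<Sum>c\<in>C. fps_const (G n (r + rep e c)) * (1 + fps_X) ^ c) * (1 + fps_X) ^ M) (M + 0)"
          by (simp only: sl npf_at_def add_0_right)
        then have "G n (r + rep e c) = 0"
          using poly_coeffs_zero[OF finC _ cC, of "\<lambda>c. G n (r + rep e c)"] by blast
        then show False using Gnz by simp
      qed
    qed
  qed
  have "K n m = (\<Sum>\<mu>\<in>{\<mu>. G n \<mu> * eval0 e \<mu> m \<noteq> 0}. G n \<mu> * eval0 e \<mu> m)"
    using Kn Q by blast
  also have "\<dots> = 0"
  proof -
    have "{\<mu>. G n \<mu> * eval0 e \<mu> m \<noteq> 0} = {}" using Q[of n] n1 by auto
    then show ?thesis by simp
  qed
  finally show ?thesis by (simp add: K_def)
qed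

theorem lemma7p3:
  fixes \<eta> :: "'i::finite \<Rightarrow> 'i \<Rightarrow> complex" and e :: 'i and w :: "'i \<Rightarrow> 'i eser"
  assumes sym: "\<forall>a b. \<eta> a b = \<eta> b a"
    and nondeg: "\<forall>x. (\<forall>b. (\<Sum>a\<in>UNIV. x a * \<eta> a b) = 0) \<longrightarrow> (\<forall>a. x a = 0)"
    and miura: "rational_miura e w"
    and pol: "\<forall>\<alpha> n. polpart e (int n) (w \<alpha> n) = (if n = 0 then ser_var e (\<alpha>, 0) else ser_zero)"
    and dv1: "\<forall>\<alpha>. ederiv (e, 0) (w \<alpha>) = (if \<alpha> = e then eone else ezero)"
    and reexp: "\<forall>\<alpha> \<beta> i. expressible_in_w e w (Kop e \<eta> w \<alpha> \<beta> i)"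
  shows "\<forall>\<alpha> \<beta> i. Kop e \<eta> w \<alpha> \<beta> i = (if i = 1 then econst (\<eta> \<alpha> \<beta>) else ezero)"
proof (intro allI)
  fix \<alpha> \<beta> i
  show "Kop e \<eta> w \<alpha> \<beta> i = (if i = 1 then econst (\<eta> \<alpha> \<beta>) else ezero)"
  proof (rule ext, rule ext)
    fix n m
    show "Kop e \<eta> w \<alpha> \<beta> i n m = (if i = 1 then econst (\<eta> \<alpha> \<beta>) else ezero) n m"
    proof (cases "n = 0")
      case True
      then show ?thesis using Kop0[OF miura pol dv1, of \<eta> \<alpha> \<beta> i]
        by (simp add: econst_def ezero_def)
    next
      case False
      then have "Kop e \<eta> w \<alpha> \<beta> i n m = 0"
        using reexp by (intro main_G[OF miura pol dv1]) auto
      then show ?thesis using False by (simp add: econst_def ezero_def)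
    qed
  qed
qed


end
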